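(* Let $T$ be a linear operator in $H$ with $\overline{\operatorname{dom}(T)}=H$, and let $V_n\subset\operatorname{dom}(T)$, $n\in\mathbb N$, be finite-dimensional subspaces with $P_{V_n}\stackrel{s}{\to}I$. Then for any compact $\Omega\subset W_{e1}(T)$ there exist finite-dimensional subspaces $H_n\subset\operatorname{dom}(T)$ with $V_n\subset H_n$, $n\in\mathbb N$, such that \[ P_{H_n}\stackrel{s}{\to}I,\qquad \sup_{\lambda\in\Omega}\operatorname{dist}(\lambda,\sigma(T_{H_n}))\to0\quad(n\to\infty), \] and if $\Omega\subset\operatorname{int}W_{e1}(T)$ is a finite set, then $\sigma(T_{H_n})=\sigma(T_{V_n})\cup\Omega$. If, in addition, (a) $W(T)\neq\mathbb C$ or $\operatorname{dom}(T)\subset\operatorname{dom}(T^* )$, and (b) $T_{V_n}\stackrel{gsr}{\to}T$ with a corresponding point $\lambda_0$ (as in the definition of generalized strong resolvent convergence) satisfying $\lambda_0\notin\overline{W(T)}$ if $W(T)\neq\mathbb C$, and $\lambda_0\notin\Omega$ otherwise, then the subspaces $H_n$ can be constructed so that moreover $T_{H_n}\stackrel{gsr}{\to}T$.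
   Context: $H$ is a separable infinite-dimensional complex Hilbert space. $W(T)=\{\langle Tx,x\rangle:x\in\operatorname{dom}(T),\|x\|=1\}$. $W_{e1}(T):=\bigcap_{V}\overline{W(T|_{V^\perp\cap\operatorname{dom}(T)})}$, the intersection over all finite-dimensional subspaces $V\subset H$. For closed $V\subset\operatorname{dom}(T)$, $P_V$ is the orthogonal projection onto $V$ and $T_V:=P_VT|_V$ the compression. For operators $T_n$ in closed subspaces $H_n$ with orthogonal projections $P_n$, $T_n\stackrel{gsr}{\to}T$ means: there exist $n_0$ and $\lambda_0\in\bigcap_{n\ge n_0}\rho(T_n)\cap\rho(T)$ with $(T_n-\lambda_0)^{-1}P_n\to(T-\lambda_0)^{-1}$ strongly. *)

theory Defs
  imports "HOL-Analysis.Analysis"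
begin

class complex_vector = ab_group_add +
  fixes scaleC :: "complex \<Rightarrow> 'a \<Rightarrow> 'a"  (infixr \<open>*\<^sub>C\<close> 75)
  assumes scaleC_add_right: "a *\<^sub>C (x + y) = a *\<^sub>C x + a *\<^sub>C y"
    and scaleC_add_left: "(a + b) *\<^sub>C x = a *\<^sub>C x + b *\<^sub>C x"
    and scaleC_scaleC: "a *\<^sub>C (b *\<^sub>C x) = (a * b) *\<^sub>C x"
    and scaleC_one: "1 *\<^sub>C x = x"

class complex_inner = complex_vector +
  fixes cinner :: "'a \<Rightarrow> 'a \<Rightarrow> complex"
  assumes cinner_commute: "cinner x y = cnj (cinner y x)"
    and cinner_add_left: "cinner (x + y) z = cinner x z + cinner y z"
    and cinner_scaleC_left: "cinner (r *\<^sub>C x) y = r * cinner x y"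
    and cinner_ge_zero: "0 \<le> Re (cinner x x)"
    and cinner_eq_zero_iff: "cinner x x = 0 \<longleftrightarrow> x = 0"

definition (in complex_inner) cnorm :: "'a \<Rightarrow> real" where
  "cnorm x = sqrt (Re (cinner x x))"

class chilbert = complex_inner +
  assumes complete:
    "(\<forall>e>0. \<exists>N. \<forall>m\<ge>N. \<forall>n\<ge>N. cnorm (X m - X n) < e) \<Longrightarrow>
     \<exists>L. (\<lambda>n. cnorm (X n - L)) \<longlonglongrightarrow> 0"

definition cspan :: "'a::complex_vector set \<Rightarrow> 'a set" where
  "cspan S = {sum (\<lambda>x. c x *\<^sub>C x) F | F c. finite F \<and> F \<subseteq> S}"

definition csubspace :: "'a::complex_vector set \<Rightarrow> bool" where
  "csubspace V \<longleftrightarrow> 0 \<in> V \<and> (\<forall>x\<in>V. \<forall>y\<in>V. x + y \<in> V) \<and> (\<forall>c. \<forall>x\<in>V. c *\<^sub>C x \<in> V)"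

definition fin_dim_subspace :: "'a::complex_vector set \<Rightarrow> bool" where
  "fin_dim_subspace V \<longleftrightarrow> csubspace V \<and> (\<exists>B. finite B \<and> B \<subseteq> V \<and> V = cspan B)"

definition clinear_on :: "'a::complex_vector set \<Rightarrow> ('a \<Rightarrow> 'a) \<Rightarrow> bool" where
  "clinear_on D T \<longleftrightarrow> csubspace D \<and>
     (\<forall>x\<in>D. \<forall>y\<in>D. T (x + y) = T x + T y) \<and> (\<forall>c. \<forall>x\<in>D. T (c *\<^sub>C x) = c *\<^sub>C T x)"

definition separable_hilbert :: "'a::chilbert itself \<Rightarrow> bool" where
  "separable_hilbert _ \<longleftrightarrow>
     (\<exists>S::'a set. countable S \<and> (\<forall>x. \<forall>e>0. \<exists>s\<in>S. cnorm (x - s) < e))"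

definition infinite_dim :: "'a::chilbert itself \<Rightarrow> bool" where
  "infinite_dim _ \<longleftrightarrow> (\<forall>B::'a set. finite B \<longrightarrow> cspan B \<noteq> UNIV)"

definition dense_set :: "'a::chilbert set \<Rightarrow> bool" where
  "dense_set D \<longleftrightarrow> (\<forall>x. \<forall>e>0. \<exists>y\<in>D. cnorm (x - y) < e)"

definition orth :: "'a::complex_inner set \<Rightarrow> 'a set" where
  "orth V = {x. \<forall>v\<in>V. cinner x v = 0}"

definition proj :: "'a::complex_inner set \<Rightarrow> 'a \<Rightarrow> 'a" where
  "proj V x = (THE y. y \<in> V \<and> (\<forall>v\<in>V. cinner (x - y) v = 0))"

text \<open>Compression T_V = P_V T restricted to V (as a map on V).\<close>
definition compr :: "'a::complex_inner set \<Rightarrow> ('a \<Rightarrow> 'a) \<Rightarrow> 'a \<Rightarrow> 'a" where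
  "compr V T = (\<lambda>x. proj V (T x))"

definition numrange :: "'a::complex_inner set \<Rightarrow> ('a \<Rightarrow> 'a) \<Rightarrow> complex set" where
  "numrange D T = {cinner (T x) x | x. x \<in> D \<and> cnorm x = 1}"

definition W_e1 :: "'a::complex_inner set \<Rightarrow> ('a \<Rightarrow> 'a) \<Rightarrow> complex set" where
  "W_e1 D T = \<Inter> {closure (numrange (orth V \<inter> D) T) | V. fin_dim_subspace V}"

definition adj_dom :: "'a::complex_inner set \<Rightarrow> ('a \<Rightarrow> 'a) \<Rightarrow> 'a set" where
  "adj_dom D T = {y. \<exists>z. \<forall>x\<in>D. cinner (T x) y = cinner x z}"

definition resolvent :: "'a::complex_inner set \<Rightarrow> ('a \<Rightarrow> 'a) \<Rightarrow> complex \<Rightarrow> 'a \<Rightarrow> 'a" where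
  "resolvent D A l = inv_into D (\<lambda>x. A x - l *\<^sub>C x)"

definition resolvent_set :: "'a::complex_inner set \<Rightarrow> 'a set \<Rightarrow> ('a \<Rightarrow> 'a) \<Rightarrow> complex set" where
  "resolvent_set K D A = {l. bij_betw (\<lambda>x. A x - l *\<^sub>C x) D K \<and>
      (\<exists>C. \<forall>y\<in>K. cnorm (resolvent D A l y) \<le> C * cnorm y)}"

definition op_spectrum :: "'a::complex_inner set \<Rightarrow> 'a set \<Rightarrow> ('a \<Rightarrow> 'a) \<Rightarrow> complex set" where
  "op_spectrum K D A = UNIV - resolvent_set K D A"

definition compr_spectrum :: "'a::complex_inner set \<Rightarrow> ('a \<Rightarrow> 'a) \<Rightarrow> complex set" where
  "compr_spectrum V T = op_spectrum V V (compr V T)"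

definition proj_strong_to_id :: "(nat \<Rightarrow> 'a::complex_inner set) \<Rightarrow> bool" where
  "proj_strong_to_id V \<longleftrightarrow> (\<forall>x. (\<lambda>n. cnorm (proj (V n) x - x)) \<longlonglongrightarrow> 0)"

definition gsr_with ::
  "(nat \<Rightarrow> 'a::complex_inner set) \<Rightarrow> (nat \<Rightarrow> 'a set) \<Rightarrow> (nat \<Rightarrow> 'a \<Rightarrow> 'a) \<Rightarrow>
   'a set \<Rightarrow> ('a \<Rightarrow> 'a) \<Rightarrow> nat \<Rightarrow> complex \<Rightarrow> bool" where
  "gsr_with Hs Ds Ts D T n0 l0 \<longleftrightarrow>
     (\<forall>n\<ge>n0. l0 \<in> resolvent_set (Hs n) (Ds n) (Ts n)) \<and> l0 \<in> resolvent_set UNIV D T \<and>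
     (\<forall>x. (\<lambda>n. cnorm (resolvent (Ds n) (Ts n) l0 (proj (Hs n) x) - resolvent D T l0 x))
            \<longlonglongrightarrow> 0)"

definition compr_gsr_with ::
  "(nat \<Rightarrow> 'a::complex_inner set) \<Rightarrow> 'a set \<Rightarrow> ('a \<Rightarrow> 'a) \<Rightarrow> nat \<Rightarrow> complex \<Rightarrow> bool" where
  "compr_gsr_with Hs D T n0 l0 = gsr_with Hs Hs (\<lambda>n. compr (Hs n) T) D T n0 l0"

definition compr_gsr :: "(nat \<Rightarrow> 'a::complex_inner set) \<Rightarrow> 'a set \<Rightarrow> ('a \<Rightarrow> 'a) \<Rightarrow> bool" where
  "compr_gsr Hs D T \<longleftrightarrow> (\<exists>n0 l0. compr_gsr_with Hs D T n0 l0)"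

end

theory Submission
  imports Defs
begin

interpretation cvs: vector_space "scaleC :: complex \<Rightarrow> 'a::complex_vector \<Rightarrow> 'a"
  by unfold_locales (auto simp: scaleC_add_right scaleC_add_left scaleC_scaleC scaleC_one)

lemma cspan_eq: "cspan S = cvs.span S"
  unfolding cspan_def cvs.span_explicit by auto

lemma csubspace_eq: "csubspace S = cvs.subspace S"
  unfolding csubspace_def cvs.subspace_def by auto

lemma scaleC_zero_left[simp]: "0 *\<^sub>C x = 0" by (rule cvs.scale_zero_left)
lemma scaleC_zero_right[simp]: "a *\<^sub>C 0 = 0" by (rule cvs.scale_zero_right)

lemma cinner_zero_left[simp]: "cinner 0 y = 0"
  using cinner_add_left[of 0 0 y] by simp
lemma cinner_add_right: "cinner x (y + z) = cinner x y + cinner x z"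
proof -
  have "cinner x (y + z) = cnj (cinner (y + z) x)" by (rule cinner_commute)
  also have "\<dots> = cnj (cinner y x) + cnj (cinner z x)" by (simp add: cinner_add_left)
  also have "\<dots> = cinner x y + cinner x z" by (simp add: cinner_commute[of x y] cinner_commute[of x z])
  finally show ?thesis .
qed
lemma cinner_zero_right[simp]: "cinner x 0 = 0"
  using cinner_add_right[of x 0 0] by simp
lemma cinner_scaleC_right: "cinner x (r *\<^sub>C y) = cnj r * cinner x y"
proof -
  have "cinner x (r *\<^sub>C y) = cnj (cinner (r *\<^sub>C y) x)" by (rule cinner_commute)
  also have "\<dots> = cnj r * cnj (cinner y x)" by (simp add: cinner_scaleC_left)
  also have "\<dots> = cnj r * cinner x y" by (simp add: cinner_commute[of x y])
  finally show ?thesis .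
qed
lemma cinner_minus_left: "cinner (- x) y = - cinner x y"
  using cinner_add_left[of x "-x" y] by (simp add: eq_neg_iff_add_eq_0 add.commute)
lemma cinner_minus_right: "cinner x (- y) = - cinner x y"
  using cinner_add_right[of x y "-y"] by (simp add: eq_neg_iff_add_eq_0 add.commute)
lemma cinner_diff_left: "cinner (x - y) z = cinner x z - cinner y z"
  by (simp only: diff_conv_add_uminus cinner_add_left cinner_minus_left)
lemma cinner_diff_right: "cinner x (y - z) = cinner x y - cinner x z"
  by (simp only: diff_conv_add_uminus cinner_add_right cinner_minus_right)
lemma cinner_sum_left: "cinner (\<Sum>a\<in>A. f a) y = (\<Sum>a\<in>A. cinner (f a) y)"
  by (induction A rule: infinite_finite_induct) (auto simp: cinner_add_left)
lemma cinner_sum_right: "cinner y (\<Sum>a\<in>A. f a) = (\<Sum>a\<in>A. cinner y (f a))"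
  by (induction A rule: infinite_finite_induct) (auto simp: cinner_add_right)

lemma cinner_self_real: "cinner x x = complex_of_real (Re (cinner x x))"
proof -
  have "cnj (cinner x x) = cinner x x" by (metis cinner_commute)
  then have "Im (cinner x x) = 0" by (metis cnj.simps(2) complex_cnj_cancel_iff neg_equal_zero complex.sel(2))
  then show ?thesis by (simp add: complex_eq_iff)
qed
lemma cnorm_nonneg: "0 \<le> cnorm x" unfolding cnorm_def using cinner_ge_zero by simp
lemma cnorm_sq: "(cnorm x)^2 = Re (cinner x x)"
  unfolding cnorm_def using cinner_ge_zero by simp
lemma cnorm_sq_c: "complex_of_real ((cnorm x)^2) = cinner x x"
  using cnorm_sq cinner_self_real by metis
lemma cnorm_zero[simp]: "cnorm 0 = 0" unfolding cnorm_def by simp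
lemma cnorm_eq_zero: "cnorm x = 0 \<longleftrightarrow> x = 0"
proof
  assume "cnorm x = 0" then have "cinner x x = 0" using cnorm_sq_c[of x] by simp
  then show "x = 0" using cinner_eq_zero_iff by blast
qed simp
lemma cnorm_pos: "x \<noteq> 0 \<Longrightarrow> 0 < cnorm x"
  using cnorm_eq_zero cnorm_nonneg by (metis order_le_less)
lemma cnorm_scaleC: "cnorm (c *\<^sub>C x) = cmod c * cnorm x"
proof -
  have "Re (cinner (c *\<^sub>C x) (c *\<^sub>C x)) = (cmod c)^2 * Re (cinner x x)"
  proof -
    have "cinner (c *\<^sub>C x) (c *\<^sub>C x) = (c * cnj c) * cinner x x"
      by (simp add: cinner_scaleC_left cinner_scaleC_right)
    also have "c * cnj c = of_real ((cmod c)^2)" by (metis complex_norm_square of_real_power)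
    finally show ?thesis by (metis Re_complex_of_real cinner_self_real of_real_mult)
  qed
  then show ?thesis unfolding cnorm_def by (simp add: real_sqrt_mult)
qed

lemma cnorm_minus_commute: "cnorm (x - y) = cnorm (y - x)"
  using cnorm_scaleC[of "-1" "x - y"] cvs.scale_minus_left[of 1 "x-y"]
  by (simp add: scaleC_one)

lemma cauchy_schwarz: "cmod (cinner x y) \<le> cnorm x * cnorm y"
proof (cases "y = 0")
  case True then show ?thesis by (simp add: cnorm_nonneg)
next
  case False
  define a where "a = cinner x y"
  define b where "b = Re (cinner y y)"
  have bpos: "b > 0" using cnorm_pos[OF False] cnorm_sq[of y] unfolding b_def
    by (metis zero_less_power)
  have yy: "cinner y y = of_real b" unfolding b_def by (rule cinner_self_real)
  have yx: "cinner y x = cnj a" unfolding a_def by (metis cinner_commute)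
  define t where "t = a / of_real b"
  have "0 \<le> Re (cinner (x - t *\<^sub>C y) (x - t *\<^sub>C y))" by (rule cinner_ge_zero)
  also have "cinner (x - t *\<^sub>C y) (x - t *\<^sub>C y) =
     cinner x x - cnj t * a - t * cnj a + t * cnj t * of_real b"
    by (simp add: cinner_diff_left cinner_diff_right cinner_scaleC_left cinner_scaleC_right
        a_def[symmetric] yx yy algebra_simps)
  also have "\<dots> = cinner x x - of_real ((cmod a)^2 / b)"
    using bpos unfolding t_def
    apply (simp add: field_simps complex_norm_square[symmetric] power2_eq_square[symmetric])
    by (simp add: power2_eq_square algebra_simps)
  finally have "(cmod a)^2 / b \<le> Re (cinner x x)" by simp
  then have "(cmod a)^2 \<le> Re (cinner x x) * b" using bpos by (simp add: divide_le_eq)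
  then have "(cmod a)^2 \<le> (cnorm x * cnorm y)^2"
    by (simp add: cnorm_sq power_mult_distrib b_def)
  then show ?thesis using cnorm_nonneg unfolding a_def
    by (meson mult_nonneg_nonneg power2_le_imp_le)
qed

lemma cnorm_triangle: "cnorm (x + y) \<le> cnorm x + cnorm y"
proof -
  have "Re (cinner (x + y) (x + y)) = Re (cinner x x) + Re (cinner y y) + 2 * Re (cinner x y)"
    using cinner_commute[of y x] by (simp add: cinner_add_left cinner_add_right)
  also have "\<dots> \<le> (cnorm x)^2 + (cnorm y)^2 + 2 * (cnorm x * cnorm y)"
    using cauchy_schwarz[of x y] complex_Re_le_cmod[of "cinner x y"] by (simp add: cnorm_sq)
  also have "\<dots> = (cnorm x + cnorm y)^2" by (simp add: power2_sum)
  finally have "(cnorm (x+y))^2 \<le> (cnorm x + cnorm y)^2" by (simp add: cnorm_sq)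
  then show ?thesis using cnorm_nonneg by (meson add_nonneg_nonneg power2_le_imp_le)
qed

lemma pythagoras: "cinner x y = 0 \<Longrightarrow> (cnorm (x + y))^2 = (cnorm x)^2 + (cnorm y)^2"
  using cinner_commute[of y x] by (simp add: cnorm_sq cinner_add_left cinner_add_right)

lemma cspan_csubspace[simp]: "csubspace (cspan S)"
  by (simp add: cspan_eq csubspace_eq)
lemma cspan_base: "a \<in> S \<Longrightarrow> a \<in> cspan S"
  by (simp add: cspan_eq cvs.span_base)
lemma cspan_minimal: "S \<subseteq> T \<Longrightarrow> csubspace T \<Longrightarrow> cspan S \<subseteq> T"
  by (simp add: cspan_eq csubspace_eq cvs.span_minimal)
lemma cspan_mono: "A \<subseteq> B \<Longrightarrow> cspan A \<subseteq> cspan B"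
  by (simp add: cspan_eq cvs.span_mono)
lemma cspan_of_subspace: "csubspace S \<Longrightarrow> cspan S = S"
  by (simp add: cspan_eq csubspace_eq)
lemma csubspace_0: "csubspace S \<Longrightarrow> 0 \<in> S"
  by (simp add: csubspace_def)
lemma csubspace_add: "csubspace S \<Longrightarrow> x \<in> S \<Longrightarrow> y \<in> S \<Longrightarrow> x + y \<in> S"
  by (simp add: csubspace_def)
lemma csubspace_scale: "csubspace S \<Longrightarrow> x \<in> S \<Longrightarrow> c *\<^sub>C x \<in> S"
  by (simp add: csubspace_def)
lemma csubspace_diff: "csubspace S \<Longrightarrow> x \<in> S \<Longrightarrow> y \<in> S \<Longrightarrow> x - y \<in> S"
  by (simp add: csubspace_eq cvs.subspace_diff)
lemma csubspace_sum: "csubspace S \<Longrightarrow> (\<And>a. a \<in> A \<Longrightarrow> f a \<in> S) \<Longrightarrow> sum f A \<in> S"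
  by (simp add: csubspace_eq cvs.subspace_sum)
lemma csubspace_inter: "csubspace S \<Longrightarrow> csubspace T \<Longrightarrow> csubspace (S \<inter> T)"
  by (simp add: csubspace_def)

lemma cspan_induct:
  assumes "x \<in> cspan S" "csubspace P" "S \<subseteq> P" shows "x \<in> P"
  using cspan_minimal assms by blast

lemma csubspace_orth_right: "csubspace {v. cinner x v = 0}"
  unfolding csubspace_def by (auto simp: cinner_add_right cinner_scaleC_right)
lemma csubspace_orth: "csubspace (orth S)"
  unfolding csubspace_def orth_def by (auto simp: cinner_add_left cinner_scaleC_left)

lemma orth_cspan: "x \<in> orth S \<Longrightarrow> x \<in> orth (cspan S)"
proof -
  assume "x \<in> orth S"
  then have "S \<subseteq> {v. cinner x v = 0}" by (auto simp: orth_def)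
  then have "cspan S \<subseteq> {v. cinner x v = 0}" by (rule cspan_minimal[OF _ csubspace_orth_right])
  then show ?thesis by (auto simp: orth_def)
qed

lemma fin_dim_cspan: "finite B \<Longrightarrow> fin_dim_subspace (cspan B)"
  unfolding fin_dim_subspace_def using cspan_base by auto
lemma fin_dimE: "fin_dim_subspace V \<Longrightarrow> (\<And>B. finite B \<Longrightarrow> V = cspan B \<Longrightarrow> P) \<Longrightarrow> P"
  unfolding fin_dim_subspace_def by blast
lemma fin_dim_csubspace: "fin_dim_subspace V \<Longrightarrow> csubspace V"
  unfolding fin_dim_subspace_def by blast

lemma clin_sub: "clinear_on D T \<Longrightarrow> csubspace D"
  by (simp add: clinear_on_def)
lemma clin_add: "clinear_on D T \<Longrightarrow> x \<in> D \<Longrightarrow> y \<in> D \<Longrightarrow> T (x + y) = T x + T y"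
  by (simp add: clinear_on_def)
lemma clin_scale: "clinear_on D T \<Longrightarrow> x \<in> D \<Longrightarrow> T (c *\<^sub>C x) = c *\<^sub>C T x"
  by (simp add: clinear_on_def)
lemma clin_zero: "clinear_on D T \<Longrightarrow> T 0 = 0"
proof -
  assume a: "clinear_on D T"
  have "T (0 *\<^sub>C 0) = 0 *\<^sub>C T 0" using clin_scale[OF a csubspace_0[OF clin_sub[OF a]]] .
  then show ?thesis by simp
qed
lemma clin_neg: "clinear_on D T \<Longrightarrow> x \<in> D \<Longrightarrow> T (- x) = - T x"
  using clin_scale[of D T x "-1"] cvs.scale_minus_left[of 1] by (simp add: scaleC_one)
lemma clin_diff: "clinear_on D T \<Longrightarrow> x \<in> D \<Longrightarrow> y \<in> D \<Longrightarrow> T (x - y) = T x - T y"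
proof -
  assume a: "clinear_on D T" "x \<in> D" "y \<in> D"
  then have "- y \<in> D" using csubspace_scale[OF clin_sub[OF a(1)] a(3), of "-1"]
    cvs.scale_minus_left[of 1 y] by (simp add: scaleC_one)
  then show ?thesis using a clin_add[of D T x "-y"] clin_neg[of D T y] by (simp only: diff_conv_add_uminus)
qed
lemma clin_subset: "clinear_on D T \<Longrightarrow> csubspace S \<Longrightarrow> S \<subseteq> D \<Longrightarrow> clinear_on S T"
  unfolding clinear_on_def by blast

lemma csubspace_T_orth:
  assumes "clinear_on D T" shows "csubspace {v \<in> D. cinner (T v) x = 0}"
proof -
  have D: "csubspace D" using clin_sub[OF assms] .
  show ?thesis unfolding csubspace_def
  proof (intro conjI ballI allI)
    show "0 \<in> {v \<in> D. cinner (T v) x = 0}" using csubspace_0[OF D] clin_zero[OF assms] by simp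
  next
    fix u v assume "u \<in> {v \<in> D. cinner (T v) x = 0}" "v \<in> {v \<in> D. cinner (T v) x = 0}"
    then show "u + v \<in> {v \<in> D. cinner (T v) x = 0}"
      using csubspace_add[OF D] clin_add[OF assms] by (simp add: cinner_add_left)
  next
    fix c v assume "v \<in> {v \<in> D. cinner (T v) x = 0}"
    then show "c *\<^sub>C v \<in> {v \<in> D. cinner (T v) x = 0}"
      using csubspace_scale[OF D] clin_scale[OF assms] by (simp add: cinner_scaleC_left)
  qed
qed

definition has_proj :: "'a::complex_inner set \<Rightarrow> bool" where
  "has_proj V \<longleftrightarrow> (\<forall>x. \<exists>y\<in>V. \<forall>v\<in>V. cinner (x - y) v = 0)"

lemma proj_unique:
  assumes V: "csubspace V" and y: "y \<in> V" and o: "\<forall>v\<in>V. cinner (x - y) v = 0"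
  shows "proj V x = y"
  unfolding proj_def
proof (rule the_equality)
  show "y \<in> V \<and> (\<forall>v\<in>V. cinner (x - y) v = 0)" using y o by blast
next
  fix y' assume y': "y' \<in> V \<and> (\<forall>v\<in>V. cinner (x - y') v = 0)"
  have d: "y' - y \<in> V" using y y' V csubspace_diff by blast
  have "cinner (x - y) (y' - y) - cinner (x - y') (y' - y) = 0" using o y' d by simp
  moreover have "cinner (x - y) (y' - y) - cinner (x - y') (y' - y) = cinner (y' - y) (y' - y)"
  proof -
    have "cinner (x - y) (y' - y) - cinner (x - y') (y' - y) = cinner ((x - y) - (x - y')) (y' - y)"
      by (rule cinner_diff_left[symmetric])
    also have "(x - y) - (x - y') = y' - y" by simp
    finally show ?thesis .
  qed
  ultimately have "cinner (y' - y) (y' - y) = 0" by simp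
  then have "y' - y = 0" using cinner_eq_zero_iff by blast
  then show "y' = y" by simp
qed

lemma proj_props:
  assumes V: "csubspace V" "has_proj V"
  shows "proj V x \<in> V" "\<And>v. v \<in> V \<Longrightarrow> cinner (x - proj V x) v = 0"
proof -
  obtain y where y: "y \<in> V" "\<forall>v\<in>V. cinner (x - y) v = 0" using V(2) unfolding has_proj_def by blast
  then have "proj V x = y" using proj_unique V by blast
  then show "proj V x \<in> V" "\<And>v. v \<in> V \<Longrightarrow> cinner (x - proj V x) v = 0" using y by auto
qed

lemma proj_id: "csubspace V \<Longrightarrow> v \<in> V \<Longrightarrow> proj V v = v"
  by (rule proj_unique) auto

lemma cinner_swap0: "cinner x y = 0 \<Longrightarrow> cinner y x = 0"
  by (metis cinner_commute complex_cnj_zero)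

lemma proj_insert:
  assumes K: "csubspace K" "has_proj K" and y: "y \<in> orth K" "cnorm y = 1"
  shows "csubspace (cspan (insert y K))" "has_proj (cspan (insert y K))"
    "\<And>x. proj (cspan (insert y K)) x = proj K x + cinner x y *\<^sub>C y"
proof -
  let ?K = "cspan (insert y K)"
  have yy: "cinner y y = 1" using cnorm_sq_c[of y] y(2) by simp
  have yK: "\<And>k. k \<in> K \<Longrightarrow> cinner k y = 0" using y(1) by (auto simp: orth_def intro: cinner_swap0)
  have main: "\<forall>v\<in>?K. cinner (x - (proj K x + cinner x y *\<^sub>C y)) v = 0" for x
  proof -
    have "x - (proj K x + cinner x y *\<^sub>C y) \<in> orth (insert y K)"
    proof -
      have "cinner (x - (proj K x + cinner x y *\<^sub>C y)) k = 0" if "k \<in> K" for k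
      proof -
        have "cinner (x - proj K x) k = 0" using proj_props(2)[OF K that] .
        then have "cinner x k - cinner (proj K x) k = 0" by (simp only: cinner_diff_left)
        moreover have "cinner y k = 0" using y(1) that by (simp add: orth_def)
        ultimately show ?thesis by (simp add: cinner_diff_left cinner_add_left cinner_scaleC_left)
      qed
      moreover have "cinner (x - (proj K x + cinner x y *\<^sub>C y)) y = 0"
        using yK[OF proj_props(1)[OF K, of x]] yy
        by (simp add: cinner_diff_left cinner_add_left cinner_scaleC_left)
      ultimately show ?thesis by (auto simp: orth_def)
    qed
    then have "x - (proj K x + cinner x y *\<^sub>C y) \<in> orth (cspan (insert y K))" by (rule orth_cspan)
    then show ?thesis by (simp add: orth_def)
  qed
  have mem: "proj K x + cinner x y *\<^sub>C y \<in> ?K" for x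
  proof -
    have "proj K x \<in> ?K" using proj_props(1)[OF K] cspan_base by blast
    moreover have "cinner x y *\<^sub>C y \<in> ?K" using cspan_base csubspace_scale cspan_csubspace by blast
    ultimately show ?thesis using csubspace_add cspan_csubspace by blast
  qed
  show "csubspace ?K" by simp
  show "has_proj ?K" unfolding has_proj_def using main mem by blast
  show "proj ?K x = proj K x + cinner x y *\<^sub>C y" for x
    using proj_unique[OF cspan_csubspace mem main] .
qed

lemma cspan_insert_span: "cspan (insert b (cspan B)) = cspan (insert b B)"
proof
  show "cspan (insert b (cspan B)) \<subseteq> cspan (insert b B)"
    by (rule cspan_minimal) (auto intro: cspan_base cspan_mono[THEN subsetD, of B "insert b B"])
  show "cspan (insert b B) \<subseteq> cspan (insert b (cspan B))"
    by (rule cspan_mono) (auto intro: cspan_base)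
qed

lemma gs_step:
  assumes K: "csubspace K" "has_proj K" and b: "b \<notin> K"
  shows "\<exists>y. y \<in> orth K \<and> cnorm y = 1 \<and> cspan (insert b K) = cspan (insert y K)"
proof -
  define e where "e = b - proj K b"
  have e0: "e \<noteq> 0" using b proj_props(1)[OF K, of b] unfolding e_def by auto
  define y where "y = complex_of_real (1 / cnorm e) *\<^sub>C e"
  have ny: "cnorm y = 1" unfolding y_def cnorm_scaleC using cnorm_pos[OF e0] by (simp add: norm_divide)
  have eK: "e \<in> orth K" using proj_props(2)[OF K] unfolding e_def orth_def by auto
  have yK: "y \<in> orth K" using eK csubspace_orth csubspace_scale unfolding y_def by blast
  have ey: "e = complex_of_real (cnorm e) *\<^sub>C y" unfolding y_def using cnorm_pos[OF e0]
    by (simp add: scaleC_scaleC scaleC_one)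
  have "cspan (insert b K) \<subseteq> cspan (insert y K)"
  proof (rule cspan_minimal)
    have "b = proj K b + complex_of_real (cnorm e) *\<^sub>C y" using ey unfolding e_def by (metis diff_add_cancel add.commute)
    moreover have "proj K b \<in> cspan (insert y K)" using proj_props(1)[OF K] cspan_base by blast
    moreover have "complex_of_real (cnorm e) *\<^sub>C y \<in> cspan (insert y K)" by (meson cspan_base cspan_csubspace csubspace_scale insertI1)
    ultimately have "b \<in> cspan (insert y K)" using csubspace_add cspan_csubspace by metis
    then show "insert b K \<subseteq> cspan (insert y K)" using cspan_base by blast
  qed simp
  moreover have "cspan (insert y K) \<subseteq> cspan (insert b K)"
  proof (rule cspan_minimal)
    have "e \<in> cspan (insert b K)" unfolding e_def using proj_props(1)[OF K] cspan_base
      by (meson csubspace_diff cspan_csubspace insertCI)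
    then have "y \<in> cspan (insert b K)" unfolding y_def using csubspace_scale cspan_csubspace by blast
    then show "insert y K \<subseteq> cspan (insert b K)" using cspan_base by blast
  qed simp
  ultimately show ?thesis using yK ny by blast
qed

lemma has_proj_zero: "has_proj {0}"
  unfolding has_proj_def by auto

lemma fin_dim_has_proj_aux: "finite B \<Longrightarrow> has_proj (cspan B)"
proof (induction B rule: finite_induct)
  case empty then show ?case by (simp add: cspan_eq has_proj_zero)
next
  case (insert b B)
  show ?case
  proof (cases "b \<in> cspan B")
    case True
    then have "cspan (insert b B) = cspan B"
      by (simp add: cspan_eq cvs.span_redundant)
    then show ?thesis using insert by simp
  next
    case False
    obtain y where y: "y \<in> orth (cspan B)" "cnorm y = 1" "cspan (insert b (cspan B)) = cspan (insert y (cspan B))"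
      using gs_step[OF cspan_csubspace insert(3) False] by blast
    then show ?thesis using proj_insert(2)[OF cspan_csubspace insert(3) y(1,2)]
      by (simp add: cspan_insert_span)
  qed
qed

lemma fin_dim_has_proj: "fin_dim_subspace V \<Longrightarrow> has_proj V"
  using fin_dim_has_proj_aux by (metis fin_dimE)

lemma fd_induct_aux:
  assumes "finite B" "P {0}"
    "\<And>K y. fin_dim_subspace K \<Longrightarrow> P K \<Longrightarrow> y \<in> orth K \<Longrightarrow> cnorm y = 1 \<Longrightarrow> P (cspan (insert y K))"
  shows "P (cspan B)"
  using assms(1)
proof (induction B rule: finite_induct)
  case empty then show ?case using assms(2) by (simp add: cspan_eq)
next
  case (insert b B)
  show ?case
  proof (cases "b \<in> cspan B")
    case True
    then have "cspan (insert b B) = cspan B"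
      by (simp add: cspan_eq cvs.span_redundant)
    then show ?thesis using insert by simp
  next
    case False
    obtain y where y: "y \<in> orth (cspan B)" "cnorm y = 1" "cspan (insert b (cspan B)) = cspan (insert y (cspan B))"
      using gs_step[OF cspan_csubspace fin_dim_has_proj_aux[OF insert(1)] False] by blast
    then show ?thesis using assms(3)[OF fin_dim_cspan[OF insert(1)] insert(3) y(1,2)]
      by (simp add: cspan_insert_span)
  qed
qed

lemma fd_induct[consumes 1, case_names zero step]:
  assumes "fin_dim_subspace S" "P {0}"
    "\<And>K y. fin_dim_subspace K \<Longrightarrow> P K \<Longrightarrow> y \<in> orth K \<Longrightarrow> cnorm y = 1 \<Longrightarrow> P (cspan (insert y K))"
  shows "P S"
  using assms fd_induct_aux by (metis fin_dimE)

lemma fin_dim_insert: "fin_dim_subspace K \<Longrightarrow> fin_dim_subspace (cspan (insert y K))"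
  by (metis fin_dimE cspan_insert_span fin_dim_cspan finite_insert)

lemma proj_orth: "csubspace V \<Longrightarrow> has_proj V \<Longrightarrow> cinner (proj V x) (x - proj V x) = 0"
  by (metis cinner_swap0 proj_props)

lemma proj_norm_le: assumes "csubspace V" "has_proj V" shows "cnorm (proj V x) \<le> cnorm x"
proof -
  have "(cnorm x)^2 = (cnorm (proj V x))^2 + (cnorm (x - proj V x))^2"
    using pythagoras[OF proj_orth[OF assms, of x]] by simp
  then have "(cnorm (proj V x))^2 \<le> (cnorm x)^2" by simp
  then show ?thesis using cnorm_nonneg by (meson power2_le_imp_le)
qed

lemma proj_best:
  assumes V: "csubspace V" "has_proj V" and H: "csubspace H" "has_proj H" and VH: "V \<subseteq> H"
  shows "cnorm (x - proj H x) \<le> cnorm (x - proj V x)"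
proof -
  have m: "proj H x - proj V x \<in> H" using proj_props(1)[OF H] proj_props(1)[OF V] VH csubspace_diff[OF H(1)] by blast
  have e: "x - proj V x = (x - proj H x) + (proj H x - proj V x)" by simp
  have "(cnorm ((x - proj H x) + (proj H x - proj V x)))^2 = (cnorm (x - proj H x))^2 + (cnorm (proj H x - proj V x))^2"
    using pythagoras[OF proj_props(2)[OF H m]] .
  then have "(cnorm (x - proj V x))^2 = (cnorm (x - proj H x))^2 + (cnorm (proj H x - proj V x))^2"
    by (simp only: e[symmetric])
  then have "(cnorm (x - proj H x))^2 \<le> (cnorm (x - proj V x))^2" by simp
  then show ?thesis using cnorm_nonneg by (meson power2_le_imp_le)
qed

lemma proj_add: assumes "csubspace V" "has_proj V" shows "proj V (x + y) = proj V x + proj V y"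
proof (rule proj_unique[OF assms(1)])
  show "proj V x + proj V y \<in> V" using proj_props(1)[OF assms] csubspace_add[OF assms(1)] by blast
  have e: "x + y - (proj V x + proj V y) = (x - proj V x) + (y - proj V y)" by (simp add: algebra_simps)
  show "\<forall>v\<in>V. cinner (x + y - (proj V x + proj V y)) v = 0"
    unfolding e using proj_props(2)[OF assms] by (simp add: cinner_add_left)
qed

lemma proj_scale: assumes "csubspace V" "has_proj V" shows "proj V (c *\<^sub>C x) = c *\<^sub>C proj V x"
proof (rule proj_unique[OF assms(1)])
  show "c *\<^sub>C proj V x \<in> V" using proj_props(1)[OF assms] csubspace_scale[OF assms(1)] by blast
  show "\<forall>v\<in>V. cinner (c *\<^sub>C x - c *\<^sub>C proj V x) v = 0"
    using proj_props(2)[OF assms] by (simp add: cvs.scale_right_diff_distrib[symmetric] cinner_scaleC_left)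
qed

lemma proj_diff: assumes "csubspace V" "has_proj V" shows "proj V (x - y) = proj V x - proj V y"
  using proj_add[OF assms, of "x - y" y] by simp

lemma fd_inj_surj:
  fixes K :: "'a::complex_inner set"
  assumes K: "fin_dim_subspace K" and L: "clinear_on K L" and LK: "\<forall>h\<in>K. L h \<in> K"
    and inj: "inj_on L K"
  shows "L ` K = K"
proof -
  have Ks: "csubspace K" using fin_dim_csubspace[OF K] .
  have Kp: "has_proj K" using fin_dim_has_proj[OF K] .
  define g where "g = (\<lambda>x. L (proj K x))"
  have lin: "Vector_Spaces.linear (scaleC::complex\<Rightarrow>'a\<Rightarrow>'a) scaleC g"
    unfolding Vector_Spaces.linear_iff
  proof (intro conjI allI)
    show "vector_space (scaleC::complex\<Rightarrow>'a\<Rightarrow>'a)" by (rule cvs.vector_space_axioms)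
    show "vector_space (scaleC::complex\<Rightarrow>'a\<Rightarrow>'a)" by (rule cvs.vector_space_axioms)
    fix x y :: 'a
    show "g (x + y) = g x + g y" unfolding g_def proj_add[OF Ks Kp]
      using clin_add[OF L proj_props(1)[OF Ks Kp] proj_props(1)[OF Ks Kp]] .
  next
    fix c :: complex and x :: 'a
    show "g (c *\<^sub>C x) = c *\<^sub>C g x" unfolding g_def proj_scale[OF Ks Kp]
      using clin_scale[OF L proj_props(1)[OF Ks Kp]] .
  qed
  interpret g: Vector_Spaces.linear "scaleC::complex\<Rightarrow>'a\<Rightarrow>'a" scaleC g by (rule lin)
  have gK: "\<And>x. x \<in> K \<Longrightarrow> g x = L x" unfolding g_def using proj_id[OF Ks] by simp
  obtain B where B: "finite B" "K = cspan B" using K by (rule fin_dimE)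
  obtain E where E: "E \<subseteq> K" "cvs.independent E" "K \<subseteq> cvs.span E" "card E = cvs.dim K"
    using cvs.basis_exists by blast
  have spanE: "cvs.span E = K"
    using E(1,3) Ks cvs.span_minimal[of E K] by (auto simp: csubspace_eq)
  have finE: "finite E" using cvs.independent_span_bound[OF B(1) E(2)] E(1) B(2)
    by (simp add: cspan_eq)
  have injg: "inj_on g (cvs.span E)" unfolding spanE using inj gK by (simp add: inj_on_def)
  have indep: "cvs.independent (g ` E)" using g.independent_injective_image[OF E(2) injg] .
  have img: "cvs.span (g ` E) = L ` K" using g.span_image[of E] unfolding spanE using gK by auto
  have cardgE: "card (g ` E) = card E" using card_image injg cvs.span_superset[of E]
    by (meson inj_on_subset)
  show "L ` K = K"
  proof (rule ccontr)
    assume "L ` K \<noteq> K"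
    then obtain y where y: "y \<in> K" "y \<notin> L ` K" using LK by blast
    have ind2: "cvs.independent (insert y (g ` E))"
      using cvs.independent_insertI[OF _ indep] y img by simp
    have yn: "y \<notin> g ` E" using y img cvs.span_superset[of "g ` E"] by blast
    have sub: "insert y (g ` E) \<subseteq> cvs.span E" unfolding spanE
      using y(1) E(1) LK gK by auto
    have "card (insert y (g ` E)) \<le> card E" using cvs.independent_span_bound[OF finE ind2 sub] by simp
    moreover have "card (insert y (g ` E)) = card E + 1" using yn finE cardgE by simp
    ultimately show False by simp
  qed
qed

lemma fd_bounded_aux:
  assumes K: "fin_dim_subspace K"
  shows "\<forall>L. clinear_on K L \<longrightarrow> (\<exists>C\<ge>0. \<forall>h\<in>K. cnorm (L h) \<le> C * cnorm h)"
  using K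
proof (induction rule: fd_induct)
  case zero show ?case
  proof (intro allI impI)
    fix L :: "'a \<Rightarrow> 'a" assume "clinear_on {0} L"
    then have "L 0 = 0" by (rule clin_zero)
    then show "\<exists>C\<ge>0. \<forall>h\<in>{0}. cnorm (L h) \<le> C * cnorm h" by auto
  qed
next
  case (step K y)
  have Ks: "csubspace K" using fin_dim_csubspace[OF step.hyps(1)] .
  have Kp: "has_proj K" using fin_dim_has_proj[OF step.hyps(1)] .
  let ?K = "cspan (insert y K)"
  have KK: "K \<subseteq> ?K" by (meson cspan_base subset_iff subset_insertI)
  have yK: "y \<in> ?K" by (simp add: cspan_base)
  show ?case
  proof (intro allI impI)
    fix L assume L: "clinear_on ?K L"
    have LK: "clinear_on K L" using clin_subset[OF L Ks KK] .
    obtain C where C: "C \<ge> 0" "\<forall>h\<in>K. cnorm (L h) \<le> C * cnorm h" using step.IH[rule_format, OF LK] by blast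
    show "\<exists>C\<ge>0. \<forall>h\<in>?K. cnorm (L h) \<le> C * cnorm h"
    proof (intro exI[of _ "C + cnorm (L y)"] conjI ballI)
      show "0 \<le> C + cnorm (L y)" using C(1) cnorm_nonneg[of "L y"] by linarith
      fix h assume h: "h \<in> ?K"
      have "h = proj ?K h" using proj_id[OF cspan_csubspace h] by simp
      also have "\<dots> = proj K h + cinner h y *\<^sub>C y" using proj_insert(3)[OF Ks Kp step.hyps(2,3)] .
      finally have hd: "h = proj K h + cinner h y *\<^sub>C y" .
      have pK: "proj K h \<in> K" using proj_props(1)[OF Ks Kp] .
      have "L h = L (proj K h) + cinner h y *\<^sub>C L y"
        using hd clin_add[OF L KK[THEN subsetD, OF pK] csubspace_scale[OF cspan_csubspace yK]]
          clin_scale[OF L yK] by metis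
      then have "cnorm (L h) \<le> cnorm (L (proj K h)) + cmod (cinner h y) * cnorm (L y)"
        using cnorm_triangle cnorm_scaleC by metis
      also have "\<dots> \<le> C * cnorm h + cnorm h * cnorm (L y)"
      proof (rule add_mono)
        show "cnorm (L (proj K h)) \<le> C * cnorm h"
          using C(2) pK proj_norm_le[OF Ks Kp, of h] C(1) by (meson mult_left_mono order_trans)
        show "cmod (cinner h y) * cnorm (L y) \<le> cnorm h * cnorm (L y)"
          using cauchy_schwarz[of h y] step.hyps(3) cnorm_nonneg[of "L y"] by (simp add: mult_right_mono)
      qed
      finally show "cnorm (L h) \<le> (C + cnorm (L y)) * cnorm h" by (simp add: algebra_simps)
    qed
  qed
qed

lemma fd_bounded:
  "fin_dim_subspace K \<Longrightarrow> clinear_on K L \<Longrightarrow> \<exists>C. \<forall>h\<in>K. cnorm (L h) \<le> C * cnorm h"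
  using fd_bounded_aux by blast

lemma clinear_on_shift:
  assumes "clinear_on K L" shows "clinear_on K (\<lambda>x. L x - l *\<^sub>C x)"
  using assms unfolding clinear_on_def
  by (simp add: cvs.scale_right_distrib cvs.scale_scale algebra_simps mult.commute)

lemma fd_resolvent_set:
  assumes K: "fin_dim_subspace K" and L: "clinear_on K L" and LK: "\<forall>h\<in>K. L h \<in> K"
  shows "l \<in> resolvent_set K K L \<longleftrightarrow> (\<forall>h\<in>K. L h - l *\<^sub>C h = 0 \<longrightarrow> h = 0)"
proof -
  have Ks: "csubspace K" using fin_dim_csubspace[OF K] .
  define M where "M = (\<lambda>x. L x - l *\<^sub>C x)"
  have M: "clinear_on K M" unfolding M_def by (rule clinear_on_shift[OF L])
  have M0: "M 0 = 0" using clin_zero[OF M] .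
  have MK: "\<forall>h\<in>K. M h \<in> K" unfolding M_def using LK Ks csubspace_diff csubspace_scale by blast
  show ?thesis
  proof
    assume "l \<in> resolvent_set K K L"
    then have "inj_on M K" unfolding resolvent_set_def M_def by (auto dest: bij_betw_imp_inj_on)
    then show "\<forall>h\<in>K. L h - l *\<^sub>C h = 0 \<longrightarrow> h = 0"
      using M0 csubspace_0[OF Ks] unfolding M_def inj_on_def by metis
  next
    assume ker: "\<forall>h\<in>K. L h - l *\<^sub>C h = 0 \<longrightarrow> h = 0"
    have inj: "inj_on M K"
    proof (rule inj_onI)
      fix x y assume xy: "x \<in> K" "y \<in> K" "M x = M y"
      then have "M (x - y) = 0" using clin_diff[OF M] by simp
      then show "x = y" using ker xy csubspace_diff[OF Ks] unfolding M_def by fastforce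
    qed
    have surj: "M ` K = K" using fd_inj_surj[OF K M MK inj] .
    have bij: "bij_betw M K K" using inj surj by (simp add: bij_betw_def)
    define R where "R = inv_into K M"
    have RK: "\<And>y. y \<in> K \<Longrightarrow> R y \<in> K" unfolding R_def using surj by (metis inv_into_into)
    have MR: "\<And>y. y \<in> K \<Longrightarrow> M (R y) = y" unfolding R_def using surj by (simp add: f_inv_into_f)
    have RM: "\<And>x. x \<in> K \<Longrightarrow> R (M x) = x" unfolding R_def using inj by simp
    have R: "clinear_on K R" unfolding clinear_on_def
    proof (intro conjI ballI allI)
      show "csubspace K" by (rule Ks)
      fix a b assume ab: "a \<in> K" "b \<in> K"
      have "M (R a + R b) = a + b" using clin_add[OF M RK[OF ab(1)] RK[OF ab(2)]] MR ab by simp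
      then show "R (a + b) = R a + R b"
        using RM[of "R a + R b"] csubspace_add[OF Ks RK[OF ab(1)] RK[OF ab(2)]] by simp
    next
      fix c a assume a: "a \<in> K"
      have "M (c *\<^sub>C R a) = c *\<^sub>C a" using clin_scale[OF M RK[OF a]] MR a by simp
      then show "R (c *\<^sub>C a) = c *\<^sub>C R a"
        using RM[of "c *\<^sub>C R a"] csubspace_scale[OF Ks RK[OF a]] by simp
    qed
    obtain C where C: "\<forall>h\<in>K. cnorm (R h) \<le> C * cnorm h" using fd_bounded[OF K R] by blast
    show "l \<in> resolvent_set K K L" unfolding resolvent_set_def resolvent_def mem_Collect_eq
      using bij C unfolding M_def R_def by blast
  qed
qed

lemma compr_linear:
  assumes T: "clinear_on D T" and K: "fin_dim_subspace K" "K \<subseteq> D"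
  shows "clinear_on K (compr K T)" "\<forall>h\<in>K. compr K T h \<in> K"
proof -
  have Ks: "csubspace K" using fin_dim_csubspace[OF K(1)] .
  have Kp: "has_proj K" using fin_dim_has_proj[OF K(1)] .
  show "\<forall>h\<in>K. compr K T h \<in> K" unfolding compr_def using proj_props(1)[OF Ks Kp] by blast
  show "clinear_on K (compr K T)" unfolding clinear_on_def compr_def
  proof (intro conjI ballI allI)
    show "csubspace K" by (rule Ks)
    fix x y assume "x \<in> K" "y \<in> K"
    then show "proj K (T (x + y)) = proj K (T x) + proj K (T y)"
      using K(2) clin_add[OF T] proj_add[OF Ks Kp] by (simp add: subset_iff)
  next
    fix c x assume "x \<in> K"
    then show "proj K (T (c *\<^sub>C x)) = c *\<^sub>C proj K (T x)"
      using K(2) clin_scale[OF T] proj_scale[OF Ks Kp] by (simp add: subset_iff)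
  qed
qed

definition eigs :: "'a::complex_inner set \<Rightarrow> ('a \<Rightarrow> 'a) \<Rightarrow> complex set" where
  "eigs K T = {l. \<exists>h\<in>K. h \<noteq> 0 \<and> proj K (T h) = l *\<^sub>C h}"

lemma compr_spectrum_eigs:
  assumes T: "clinear_on D T" and K: "fin_dim_subspace K" "K \<subseteq> D"
  shows "compr_spectrum K T = eigs K T"
proof -
  have "l \<in> resolvent_set K K (compr K T) \<longleftrightarrow> l \<notin> eigs K T" for l
    using fd_resolvent_set[OF K(1) compr_linear[OF T K], of l] unfolding eigs_def compr_def
    by auto
  then show ?thesis unfolding compr_spectrum_def op_spectrum_def by auto
qed

lemma inner_expand:
  "cinner (\<alpha> *\<^sub>C u + \<beta> *\<^sub>C w) (\<alpha> *\<^sub>C u + \<beta> *\<^sub>C w) =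
    \<alpha> * cnj \<alpha> * cinner u u + \<alpha> * cnj \<beta> * cinner u w + \<beta> * cnj \<alpha> * cinner w u + \<beta> * cnj \<beta> * cinner w w"
  by (simp add: cinner_add_left cinner_add_right cinner_scaleC_left cinner_scaleC_right algebra_simps)

lemma quad_expand:
  assumes T: "clinear_on S T" and u: "u \<in> S" and w: "w \<in> S"
  shows "cinner (T (\<alpha> *\<^sub>C u + \<beta> *\<^sub>C w)) (\<alpha> *\<^sub>C u + \<beta> *\<^sub>C w) =
    \<alpha> * cnj \<alpha> * cinner (T u) u + \<alpha> * cnj \<beta> * cinner (T u) w + \<beta> * cnj \<alpha> * cinner (T w) u + \<beta> * cnj \<beta> * cinner (T w) w"
proof -
  have S: "csubspace S" using clin_sub[OF T] .
  have "T (\<alpha> *\<^sub>C u + \<beta> *\<^sub>C w) = \<alpha> *\<^sub>C T u + \<beta> *\<^sub>C T w"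
    using clin_add[OF T csubspace_scale[OF S u] csubspace_scale[OF S w]] clin_scale[OF T u] clin_scale[OF T w]
    by simp
  then show ?thesis
    by (simp add: cinner_add_left cinner_add_right cinner_scaleC_left cinner_scaleC_right algebra_simps)
qed

lemma TH_segment:
  assumes S: "csubspace S" and T: "clinear_on S T" and x: "x \<in> S" "cnorm x = 1"
    and y: "y \<in> S" "cnorm y = 1" and ab: "cinner (T x) x \<noteq> cinner (T y) y"
    and tau: "0 \<le> \<tau>" "\<tau> \<le> 1"
  shows "\<exists>w\<in>S. cnorm w = 1 \<and> cinner (T w) w = cinner (T x) x + complex_of_real \<tau> * (cinner (T y) y - cinner (T x) x)"
proof -
  define a where "a = cinner (T x) x"
  define b where "b = cinner (T y) y"
  have ba: "b - a \<noteq> 0" using ab unfolding a_def b_def by simp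
  have xx: "cinner x x = 1" using cnorm_sq_c[of x] x(2) by simp
  have yy: "cinner y y = 1" using cnorm_sq_c[of y] y(2) by simp
  define p where "p = (cinner (T x) y - a * cinner x y) / (b - a)"
  define r where "r = (cinner (T y) x - a * cnj (cinner x y)) / (b - a)"
  define q where "q = p - cnj r"
  define \<omega> where "\<omega> = (if q = 0 then 1 else cnj q / of_real (cmod q))"
  have "cmod \<omega> = 1" unfolding \<omega>_def by (auto simp: norm_divide)
  then have om1: "\<omega> * cnj \<omega> = 1" using complex_norm_square[of \<omega>] by simp
  have omq: "Im (\<omega> * q) = 0"
  proof (cases "q = 0")
    case True then show ?thesis unfolding \<omega>_def by simp
  next
    case False
    then have "\<omega> * q = of_real (cmod q)" unfolding \<omega>_def
      by (simp add: field_simps complex_norm_square[symmetric] power2_eq_square)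
    then show ?thesis by simp
  qed
  define x' where "x' = \<omega> *\<^sub>C x"
  have x'S: "x' \<in> S" unfolding x'_def using csubspace_scale[OF S x(1)] .
  have Tx': "T x' = \<omega> *\<^sub>C T x" unfolding x'_def using clin_scale[OF T x(1)] .
  have om2: "cnj \<omega> * \<omega> = 1" using om1 by (simp add: mult.commute)
  have x'x': "cinner x' x' = 1" unfolding x'_def using xx om1 om2
    by (simp add: cinner_scaleC_left cinner_scaleC_right mult.assoc[symmetric])
  have Tx'x': "cinner (T x') x' = a" unfolding Tx' unfolding x'_def a_def
    using om1 om2 by (simp add: cinner_scaleC_left cinner_scaleC_right mult.assoc[symmetric])
  define G where "G = cinner x' y"
  define B1 where "B1 = cinner (T x') y"
  define C1 where "C1 = cinner (T y) x'"
  have yx': "cinner y x' = cnj G" unfolding G_def by (metis cinner_commute)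
  define \<gamma> where "\<gamma> = (B1 + C1 - a * (G + cnj G)) / (b - a)"
  have B1e: "B1 = \<omega> * cinner (T x) y" unfolding B1_def Tx' by (simp add: cinner_scaleC_left)
  have C1e: "C1 = cnj \<omega> * cinner (T y) x" unfolding C1_def x'_def by (simp add: cinner_scaleC_right)
  have Ge: "G = \<omega> * cinner x y" unfolding G_def x'_def by (simp add: cinner_scaleC_left)
  have \<gamma>0: "\<gamma> = (\<omega> * (cinner (T x) y - a * cinner x y) + cnj \<omega> * (cinner (T y) x - a * cnj (cinner x y))) / (b - a)"
    unfolding \<gamma>_def B1e C1e Ge by (simp add: algebra_simps)
  have \<gamma>: "\<gamma> = \<omega> * p + cnj \<omega> * r"
    unfolding \<gamma>0 p_def r_def by (simp add: add_divide_distrib)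
  have Im\<gamma>: "Im \<gamma> = 0"
  proof -
    have "Im (cnj \<omega> * r) = - Im (\<omega> * cnj r)"
      by (simp add: algebra_simps)
    then have "Im \<gamma> = Im (\<omega> * q)" unfolding \<gamma> q_def by (simp add: algebra_simps)
    then show ?thesis using omq by simp
  qed
  have \<gamma>r: "\<gamma> = of_real (Re \<gamma>)" using Im\<gamma> by (simp add: complex_eq_iff)
  define z where "z = (\<lambda>t::real. complex_of_real (1 - t) *\<^sub>C x' + complex_of_real t *\<^sub>C y)"
  have zS: "z t \<in> S" for t unfolding z_def
    using csubspace_add[OF S csubspace_scale[OF S x'S] csubspace_scale[OF S y(1)]] .
  define N where "N = (\<lambda>t::real. (1 - t)^2 + (1 - t) * t * (2 * Re G) + t^2)"
  have zz: "cinner (z t) (z t) = of_real (N t)" for t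
    unfolding z_def inner_expand x'x' yy yx' N_def
    by (simp add: complex_eq_iff power2_eq_square algebra_simps G_def[symmetric])
  have Tzz: "cinner (T (z t)) (z t) = a * cinner (z t) (z t) + (b - a) * of_real ((1 - t) * t * Re \<gamma> + t^2)" for t
  proof -
    have e1: "cinner (T (z t)) (z t) = of_real ((1-t)^2) * a + of_real ((1-t)*t) * (B1 + C1) + of_real (t^2) * b"
      unfolding z_def quad_expand[OF T x'S y(1)] Tx'x' B1_def[symmetric] C1_def[symmetric] b_def[symmetric]
      by (simp add: power2_eq_square algebra_simps)
    have e2: "cinner (z t) (z t) = of_real ((1-t)^2) + of_real ((1-t)*t) * (G + cnj G) + of_real (t^2)"
      unfolding z_def inner_expand x'x' yy yx' G_def[symmetric]
      by (simp add: power2_eq_square algebra_simps)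
    have e3: "B1 + C1 = (b - a) * \<gamma> + a * (G + cnj G)" unfolding \<gamma>_def using ba by simp
    have g: "complex_of_real ((1 - t) * t * Re \<gamma> + t^2) = complex_of_real ((1-t)*t) * \<gamma> + complex_of_real (t^2)"
      by (subst (2) \<gamma>r) simp
    show ?thesis unfolding e1 e2 e3 g by (simp add: algebra_simps)
  qed
  have z0: "z t \<noteq> 0" if t: "0 \<le> t" "t \<le> 1" for t
  proof
    assume z: "z t = 0"
    show False
    proof (cases "t = 0")
      case True then have "x' = 0" using z unfolding z_def by (simp add: scaleC_one)
      then show False using x'x' by simp
    next
      case False
      define \<kappa> where "\<kappa> = - (1 - t) / t"
      have "complex_of_real t *\<^sub>C y + complex_of_real (1 - t) *\<^sub>C x' = 0" using z unfolding z_def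
        by (simp add: add.commute)
      then have "complex_of_real t *\<^sub>C y = - (complex_of_real (1 - t) *\<^sub>C x')"
        by (simp add: eq_neg_iff_add_eq_0)
      then have h1: "complex_of_real t *\<^sub>C y = complex_of_real (- (1 - t)) *\<^sub>C x'"
        by (metis cvs.scale_minus_left of_real_minus)
      have "y = complex_of_real (1/t) *\<^sub>C (complex_of_real t *\<^sub>C y)"
        using False by (simp add: scaleC_scaleC scaleC_one)
      also have "\<dots> = complex_of_real (1/t) *\<^sub>C (complex_of_real (- (1 - t)) *\<^sub>C x')" by (simp only: h1)
      also have "\<dots> = complex_of_real \<kappa> *\<^sub>C x'" unfolding \<kappa>_def scaleC_scaleC of_real_mult[symmetric]
        by simp
      finally have yk: "y = complex_of_real \<kappa> *\<^sub>C x'" .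
      have "cinner y y = of_real (\<kappa>^2)" unfolding yk using x'x'
        by (simp add: cinner_scaleC_left cinner_scaleC_right power2_eq_square)
      moreover have "b = of_real (\<kappa>^2) * a" unfolding b_def yk
        using clin_scale[OF T x'S] Tx'x'
        by (simp add: cinner_scaleC_left cinner_scaleC_right power2_eq_square)
      ultimately show False using yy ba by simp
    qed
  qed
  have Npos: "N t > 0" if "0 \<le> t" "t \<le> 1" for t
  proof -
    have "N t = (cnorm (z t))^2" using cnorm_sq[of "z t"] zz[of t] by simp
    then show ?thesis using cnorm_pos[OF z0[OF that]] by simp
  qed
  define f where "f = (\<lambda>t. ((1 - t) * t * Re \<gamma> + t^2) / N t)"
  have cont: "continuous_on {0..1} f" unfolding f_def N_def
    using Npos unfolding N_def by (intro continuous_intros) (auto, fastforce)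
  have f0: "f 0 = 0" unfolding f_def by simp
  have f1: "f 1 = 1" unfolding f_def N_def by simp
  obtain t where t: "0 \<le> t" "t \<le> 1" "f t = \<tau>"
    using IVT'[of f 0 \<tau> 1] tau f0 f1 cont by auto
  define w where "w = complex_of_real (1 / cnorm (z t)) *\<^sub>C z t"
  have nz: "cnorm (z t) > 0" using cnorm_pos[OF z0[OF t(1,2)]] .
  have Nz: "N t = (cnorm (z t))^2" using cnorm_sq[of "z t"] zz[of t] by simp
  have wS: "w \<in> S" unfolding w_def using csubspace_scale[OF S zS] .
  have wn: "cnorm w = 1" unfolding w_def cnorm_scaleC using nz by (simp add: norm_divide)
  have "cinner (T w) w = complex_of_real (1 / (cnorm (z t))^2) * cinner (T (z t)) (z t)"
    unfolding w_def using clin_scale[OF T zS]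
    by (simp add: cinner_scaleC_left cinner_scaleC_right power2_eq_square)
  also have "cinner (T (z t)) (z t) = of_real (N t) * (a + complex_of_real \<tau> * (b - a))"
  proof -
    have "(1 - t) * t * Re \<gamma> + t^2 = \<tau> * N t" using t(3) Npos[OF t(1,2)] unfolding f_def by (simp add: field_simps)
    then show ?thesis unfolding Tzz zz by (simp add: algebra_simps)
  qed
  finally have "cinner (T w) w = complex_of_real (1 / (cnorm (z t))^2) * (of_real ((cnorm (z t))^2) * (a + complex_of_real \<tau> * (b - a)))"
    unfolding Nz .
  also have "\<dots> = complex_of_real (1 / (cnorm (z t))^2 * (cnorm (z t))^2) * (a + complex_of_real \<tau> * (b - a))"
    by (simp only: of_real_mult mult.assoc)
  also have "1 / (cnorm (z t))^2 * (cnorm (z t))^2 = 1" using nz by simp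
  finally have "cinner (T w) w = a + complex_of_real \<tau> * (b - a)" by simp
  then show ?thesis using wS wn unfolding a_def b_def by blast
qed

lemma numrange_convex:
  assumes S: "csubspace S" and T: "clinear_on S T"
  shows "convex (numrange S T)"
  unfolding convex_def
proof (intro ballI allI impI)
  fix p q :: complex and u v :: real
  assume p: "p \<in> numrange S T" and q: "q \<in> numrange S T" and uv: "0 \<le> u" "0 \<le> v" "u + v = 1"
  obtain x where x: "x \<in> S" "cnorm x = 1" "p = cinner (T x) x" using p unfolding numrange_def by blast
  obtain y where y: "y \<in> S" "cnorm y = 1" "q = cinner (T y) y" using q unfolding numrange_def by blast
  have e: "u *\<^sub>R p + v *\<^sub>R q = p + complex_of_real v * (q - p)"
    using uv(3) by (simp add: scaleR_conv_of_real algebra_simps) (metis add_diff_cancel_right' diff_add_cancel mult.commute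
      of_real_add of_real_1 distrib_left mult.right_neutral add_diff_eq)
  show "u *\<^sub>R p + v *\<^sub>R q \<in> numrange S T"
  proof (cases "p = q")
    case True then show ?thesis using p e by simp
  next
    case False
    obtain w where "w \<in> S" "cnorm w = 1" "cinner (T w) w = p + complex_of_real v * (q - p)"
      using TH_segment[OF S T x(1,2) y(1,2) _ uv(2)] False uv x(3) y(3) by auto
    then show ?thesis unfolding e numrange_def mem_Collect_eq by (intro exI[of _ w]) auto
  qed
qed

lemma interior_We1:
  assumes T: "clinear_on D T" and U: "fin_dim_subspace U" and om: "\<omega> \<in> interior (W_e1 D T)"
  shows "\<omega> \<in> numrange (orth U \<inter> D) T"
proof -
  let ?S = "orth U \<inter> D"
  have S: "csubspace ?S" using csubspace_inter[OF csubspace_orth clin_sub[OF T]] .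
  have TS: "clinear_on ?S T" using clin_subset[OF T S] by blast
  have "W_e1 D T \<subseteq> closure (numrange ?S T)" unfolding W_e1_def using U by blast
  then have "interior (W_e1 D T) \<subseteq> interior (closure (numrange ?S T))" by (rule interior_mono)
  also have "\<dots> = interior (numrange ?S T)" using convex_interior_closure[OF numrange_convex[OF S TS]] .
  also have "\<dots> \<subseteq> numrange ?S T" by (rule interior_subset)
  finally show ?thesis using om by blast
qed

lemma We1_approx:
  assumes U: "fin_dim_subspace U" and om: "\<omega> \<in> W_e1 D T" and e: "e > 0"
  shows "\<exists>x. x \<in> orth U \<inter> D \<and> cnorm x = 1 \<and> dist (cinner (T x) x) \<omega> < e"
proof -
  have "\<omega> \<in> closure (numrange (orth U \<inter> D) T)" using om U unfolding W_e1_def by blast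
  then obtain \<mu> where "\<mu> \<in> numrange (orth U \<inter> D) T" "dist \<mu> \<omega> < e"
    using e closure_approachable by blast
  then show ?thesis unfolding numrange_def by blast
qed

inductive good :: "('a::chilbert \<Rightarrow> 'a) \<Rightarrow> 'a set \<Rightarrow> bool \<Rightarrow> 'a set \<Rightarrow> 'a list \<Rightarrow> bool"
  for T D A V where
  gNil: "good T D A V []"
| gSnoc: "good T D A V xs \<Longrightarrow> y \<in> D \<Longrightarrow> cnorm y = 1 \<Longrightarrow>
     (\<forall>k\<in>cspan (V \<union> set xs). cinner y k = 0 \<and> cinner (T k) y = 0 \<and> (A \<longrightarrow> cinner (T y) k = 0)) \<Longrightarrow>
     good T D A V (xs @ [y])"

lemma cspan_snoc: "cspan (V \<union> set (xs @ [y])) = cspan (insert y (cspan (V \<union> set xs)))"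
  by (simp add: cspan_insert_span)

lemma good_basic:
  assumes T: "clinear_on D T" and V: "fin_dim_subspace V" "V \<subseteq> D" and g: "good T D A V xs"
  shows "fin_dim_subspace (cspan (V \<union> set xs)) \<and> cspan (V \<union> set xs) \<subseteq> D \<and> set xs \<subseteq> D"
  using g
proof (induction rule: good.induct)
  case gNil
  have "cspan V = V" using cspan_of_subspace[OF fin_dim_csubspace[OF V(1)]] .
  then show ?case using V by simp
next
  case (gSnoc xs y)
  have "V \<union> set (xs @ [y]) \<subseteq> D" using gSnoc V(2) by auto
  then have "cspan (V \<union> set (xs @ [y])) \<subseteq> D"
    using cspan_minimal[OF _ clin_sub[OF T]] by blast
  moreover have "fin_dim_subspace (cspan (V \<union> set (xs @ [y])))"
    unfolding cspan_snoc using fin_dim_insert gSnoc by blast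
  ultimately show ?case using gSnoc by auto
qed

lemma V_sub_span: "V \<subseteq> cspan (V \<union> S)"
  using cspan_base by blast

lemma orth_swap: "y \<in> orth K \<Longrightarrow> k \<in> K \<Longrightarrow> cinner k y = 0"
  unfolding orth_def by (auto intro: cinner_swap0)

locale ext_step =
  fixes T :: "'a::chilbert \<Rightarrow> 'a" and D K y
  assumes T: "clinear_on D T" and K: "fin_dim_subspace K" "K \<subseteq> D"
    and y: "y \<in> D" "cnorm y = 1" "y \<in> orth K" and Ty: "\<forall>k\<in>K. cinner (T k) y = 0"
begin

abbreviation "K' \<equiv> cspan (insert y K)"

lemma Ks: "csubspace K" using fin_dim_csubspace[OF K(1)] .
lemma Kp: "has_proj K" using fin_dim_has_proj[OF K(1)] .
lemma K's: "csubspace K'" by simp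
lemma K'p: "has_proj K'" using proj_insert(2)[OF Ks Kp y(3,2)] .
lemma K'fd: "fin_dim_subspace K'" using fin_dim_insert[OF K(1)] .
lemma KK': "K \<subseteq> K'" by (meson cspan_base subset_iff subset_insertI)
lemma yK': "y \<in> K'" by (simp add: cspan_base)
lemma K'D: "K' \<subseteq> D" using K(2) y(1) cspan_minimal[OF _ clin_sub[OF T]] by blast
lemma projK': "proj K' z = proj K z + cinner z y *\<^sub>C y" using proj_insert(3)[OF Ks Kp y(3,2)] .
lemma yy: "cinner y y = 1" using cnorm_sq_c[of y] y(2) by simp

lemma decomp: "h \<in> K' \<Longrightarrow> h = proj K h + cinner h y *\<^sub>C y"
  using proj_id[OF K's, of h] projK' by simp

lemma Th_y: assumes h: "h \<in> K'" shows "cinner (T h) y = cinner h y * cinner (T y) y"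
proof -
  have pk: "proj K h \<in> K" using proj_props(1)[OF Ks Kp] .
  have "T h = T (proj K h) + cinner h y *\<^sub>C T y"
    using decomp[OF h] clin_add[OF T K(2)[THEN subsetD, OF pk] csubspace_scale[OF clin_sub[OF T] y(1)]]
      clin_scale[OF T y(1)] by metis
  then show ?thesis using Ty pk by (simp add: cinner_add_left cinner_scaleC_left)
qed

lemma projK'_T_K: "k \<in> K \<Longrightarrow> proj K' (T k) = proj K (T k)"
  using projK' Ty by simp

lemma eig_step: "eigs K' T = eigs K T \<union> {cinner (T y) y}"
proof -
  let ?\<mu> = "cinner (T y) y"
  have sub1: "eigs K T \<subseteq> eigs K' T"
  proof
    fix l assume "l \<in> eigs K T"
    then obtain h where h: "h \<in> K" "h \<noteq> 0" "proj K (T h) = l *\<^sub>C h" unfolding eigs_def by blast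
    have "proj K' (T h) = l *\<^sub>C h" using projK'_T_K[OF h(1)] h(3) by simp
    moreover have "h \<in> K'" using KK' h(1) by blast
    ultimately show "l \<in> eigs K' T" unfolding eigs_def using h(2) by blast
  qed
  have inner_y: "cinner (proj K' (T h) - l *\<^sub>C h) y = cinner h y * (?\<mu> - l)" if h: "h \<in> K'" for h l
  proof -
    have "cinner (proj K' (T h)) y = cinner (T h) y"
      using projK' yy orth_swap[OF y(3) proj_props(1)[OF Ks Kp]]
      by (simp add: cinner_add_left cinner_scaleC_left)
    then show ?thesis using Th_y[OF h] by (simp add: cinner_diff_left cinner_scaleC_left algebra_simps)
  qed
  have mu: "?\<mu> \<in> eigs K' T"
  proof (rule ccontr)
    assume nm: "?\<mu> \<notin> eigs K' T"
    define M where "M = (\<lambda>x. compr K' T x - ?\<mu> *\<^sub>C x)"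
    have cl: "clinear_on K' (compr K' T)" "\<forall>h\<in>K'. compr K' T h \<in> K'"
      using compr_linear[OF T K'fd K'D] by auto
    have M: "clinear_on K' M" unfolding M_def by (rule clinear_on_shift[OF cl(1)])
    have MK: "\<forall>h\<in>K'. M h \<in> K'" unfolding M_def using cl(2) csubspace_diff csubspace_scale K's by blast
    have inj: "inj_on M K'"
    proof (rule inj_onI)
      fix a b assume ab: "a \<in> K'" "b \<in> K'" "M a = M b"
      then have "M (a - b) = 0" using clin_diff[OF M] by simp
      moreover have "a - b \<in> K'" using ab csubspace_diff[OF K's] by blast
      ultimately have "a - b = 0"
        using nm unfolding M_def compr_def eigs_def by (metis (mono_tags, lifting) mem_Collect_eq right_minus_eq)
      then show "a = b" by simp
    qed
    have "M ` K' = K'" using fd_inj_surj[OF K'fd M MK inj] .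
    then obtain h where h: "h \<in> K'" "M h = y" using yK' by force
    then have "cinner y y = 0" using inner_y[OF h(1), of ?\<mu>] unfolding M_def compr_def by simp
    then show False using yy by simp
  qed
  have sub2: "eigs K' T \<subseteq> eigs K T \<union> {?\<mu>}"
  proof
    fix l assume "l \<in> eigs K' T"
    then obtain h where h: "h \<in> K'" "h \<noteq> 0" "proj K' (T h) = l *\<^sub>C h" unfolding eigs_def by blast
    show "l \<in> eigs K T \<union> {?\<mu>}"
    proof (cases "l = ?\<mu>")
      case False
      have "cinner h y * (?\<mu> - l) = 0" using inner_y[OF h(1), of l] h(3) by simp
      then have c0: "cinner h y = 0" using False by simp
      then have hK: "h = proj K h" using decomp[OF h(1)] by simp
      then have hK2: "h \<in> K" using proj_props(1)[OF Ks Kp] by metis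
      have "proj K (T h) = l *\<^sub>C h" using projK'_T_K[OF hK2] h(3) by simp
      then show ?thesis unfolding eigs_def using hK2 h(2) by blast
    qed simp
  qed
  show ?thesis using sub1 sub2 mu by blast
qed

end

lemma good_step_locale:
  assumes T: "clinear_on D T" and V: "fin_dim_subspace V" "V \<subseteq> D" and g: "good T D A V xs"
    and y: "y \<in> D" "cnorm y = 1"
    and c: "\<forall>k\<in>cspan (V \<union> set xs). cinner y k = 0 \<and> cinner (T k) y = 0 \<and> (A \<longrightarrow> cinner (T y) k = 0)"
  shows "ext_step T D (cspan (V \<union> set xs)) y"
  using good_basic[OF T V g] y c unfolding ext_step_def orth_def by (auto simp: T)

lemma good_eigs:
  assumes T: "clinear_on D T" and V: "fin_dim_subspace V" "V \<subseteq> D" and g: "good T D A V xs"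
  shows "eigs (cspan (V \<union> set xs)) T = eigs V T \<union> (\<lambda>x. cinner (T x) x) ` set xs"
  using g
proof (induction rule: good.induct)
  case gNil
  have "cspan V = V" using cspan_of_subspace[OF fin_dim_csubspace[OF V(1)]] .
  then show ?case by simp
next
  case (gSnoc xs y)
  interpret ext_step T D "cspan (V \<union> set xs)" y using good_step_locale[OF T V gSnoc(1-4)] .
  show ?case unfolding cspan_snoc eig_step gSnoc(5) by auto
qed

lemma good_projV:
  assumes T: "clinear_on D T" and V: "fin_dim_subspace V" "V \<subseteq> D" and g: "good T D A V xs"
  shows "\<forall>v\<in>V. proj (cspan (V \<union> set xs)) (T v) = proj V (T v)"
  using g
proof (induction rule: good.induct)
  case gNil
  have "cspan V = V" using cspan_of_subspace[OF fin_dim_csubspace[OF V(1)]] .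
  then show ?case by simp
next
  case (gSnoc xs y)
  interpret ext_step T D "cspan (V \<union> set xs)" y using good_step_locale[OF T V gSnoc(1-4)] .
  show ?case unfolding cspan_snoc using gSnoc(5) projK'_T_K V_sub_span by (metis subsetD)
qed

lemma good_inv2:
  assumes T: "clinear_on D T" and V: "fin_dim_subspace V" "V \<subseteq> D" and g: "good T D True V xs"
    and \<delta>: "\<delta> \<ge> 0" and mu: "\<forall>x\<in>set xs. \<delta> \<le> cmod (cinner (T x) x - l0)"
  shows "\<forall>h\<in>cspan (V \<union> set xs). h \<in> orth V \<longrightarrow>
          proj (cspan (V \<union> set xs)) (T h) - l0 *\<^sub>C h \<in> orth V \<and>
          \<delta> * cnorm h \<le> cnorm (proj (cspan (V \<union> set xs)) (T h) - l0 *\<^sub>C h)"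
  using g mu
proof (induction rule: good.induct)
  case gNil
  have "cspan V = V" using cspan_of_subspace[OF fin_dim_csubspace[OF V(1)]] .
  moreover have "h \<in> V \<Longrightarrow> h \<in> orth V \<Longrightarrow> h = 0" for h
    unfolding orth_def using cinner_eq_zero_iff by blast
  ultimately show ?case
  proof (intro ballI impI)
    fix h assume "h \<in> cspan (V \<union> set [])" "h \<in> orth V"
    then have "h = 0" using \<open>cspan V = V\<close> \<open>\<And>h. h \<in> V \<Longrightarrow> h \<in> orth V \<Longrightarrow> h = 0\<close> by simp
    then show "proj (cspan (V \<union> set [])) (T h) - l0 *\<^sub>C h \<in> orth V \<and>
          \<delta> * cnorm h \<le> cnorm (proj (cspan (V \<union> set [])) (T h) - l0 *\<^sub>C h)"
      using clin_zero[OF T] proj_id[OF fin_dim_csubspace[OF V(1)] csubspace_0[OF fin_dim_csubspace[OF V(1)]]]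
        csubspace_0[OF csubspace_orth] \<open>cspan V = V\<close> by (simp add: cnorm_nonneg)
  qed
next
  case (gSnoc xs y)
  interpret ext_step T D "cspan (V \<union> set xs)" y using good_step_locale[OF T V gSnoc(1-4)] .
  let ?K = "cspan (V \<union> set xs)"
  have IH: "\<forall>h\<in>?K. h \<in> orth V \<longrightarrow> proj ?K (T h) - l0 *\<^sub>C h \<in> orth V \<and>
          \<delta> * cnorm h \<le> cnorm (proj ?K (T h) - l0 *\<^sub>C h)" using gSnoc by simp
  have muy: "\<delta> \<le> cmod (cinner (T y) y - l0)" using gSnoc(6) by simp
  have TyK: "\<forall>k\<in>?K. cinner (T y) k = 0" using gSnoc(4) by simp
  have PTy: "proj ?K (T y) = 0" using proj_unique[OF Ks csubspace_0[OF Ks]] TyK by simp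
  have yV: "y \<in> orth V" using y(3) V_sub_span unfolding orth_def by blast
  show ?case unfolding cspan_snoc
  proof (intro ballI impI)
    fix h assume h: "h \<in> K'" and hV: "h \<in> orth V"
    define k where "k = proj ?K h"
    define c where "c = cinner h y"
    have kK: "k \<in> ?K" unfolding k_def using proj_props(1)[OF Ks Kp] .
    have hd: "h = k + c *\<^sub>C y" unfolding k_def c_def using decomp[OF h] .
    have kV: "k \<in> orth V"
    proof -
      have "k = h - c *\<^sub>C y" using hd by simp
      then show ?thesis using hV yV csubspace_diff[OF csubspace_orth] csubspace_scale[OF csubspace_orth] by metis
    qed
    have kD: "k \<in> D" using kK K(2) by blast
    have Th: "T h = T k + c *\<^sub>C T y"
      using hd clin_add[OF T kD csubspace_scale[OF clin_sub[OF T] y(1)]] clin_scale[OF T y(1)] by metis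
    have "proj K' (T h) = proj ?K (T h) + cinner (T h) y *\<^sub>C y" using projK' .
    also have "proj ?K (T h) = proj ?K (T k)"
      using Th proj_add[OF Ks Kp] proj_scale[OF Ks Kp] PTy by simp
    also have "cinner (T h) y = c * cinner (T y) y" unfolding c_def using Th_y[OF h] .
    finally have e: "proj K' (T h) - l0 *\<^sub>C h = (proj ?K (T k) - l0 *\<^sub>C k) + (c * (cinner (T y) y - l0)) *\<^sub>C y"
      unfolding hd by (simp add: algebra_simps cvs.scale_right_distrib cvs.scale_left_distrib
        cvs.scale_left_diff_distrib)
    define u where "u = proj ?K (T k) - l0 *\<^sub>C k"
    have uK: "u \<in> ?K" unfolding u_def using proj_props(1)[OF Ks Kp] kK csubspace_diff[OF Ks] csubspace_scale[OF Ks] by blast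
    have uV: "u \<in> orth V" and ub: "\<delta> * cnorm k \<le> cnorm u" using IH kK kV unfolding u_def by auto
    show "proj K' (T h) - l0 *\<^sub>C h \<in> orth V \<and> \<delta> * cnorm h \<le> cnorm (proj K' (T h) - l0 *\<^sub>C h)"
    proof
      show "proj K' (T h) - l0 *\<^sub>C h \<in> orth V" unfolding e u_def[symmetric]
        using uV yV csubspace_add[OF csubspace_orth] csubspace_scale[OF csubspace_orth] by blast
      have uy: "cinner u ((c * (cinner (T y) y - l0)) *\<^sub>C y) = 0"
        using orth_swap[OF y(3) uK] by (simp add: cinner_scaleC_right)
      have ky: "cinner k (c *\<^sub>C y) = 0" using orth_swap[OF y(3) kK] by (simp add: cinner_scaleC_right)
      have n1: "(cnorm (proj K' (T h) - l0 *\<^sub>C h))^2 = (cnorm u)^2 + (cmod c * cmod (cinner (T y) y - l0))^2"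
        unfolding e u_def[symmetric] pythagoras[OF uy] cnorm_scaleC y(2) by (simp add: norm_mult)
      have n2: "(cnorm h)^2 = (cnorm k)^2 + (cmod c)^2"
        unfolding hd pythagoras[OF ky] cnorm_scaleC y(2) by simp
      have "(\<delta> * cnorm h)^2 = (\<delta> * cnorm k)^2 + (\<delta> * cmod c)^2" unfolding power_mult_distrib n2
        by (simp add: algebra_simps)
      also have "\<dots> \<le> (cnorm u)^2 + (cmod c * cmod (cinner (T y) y - l0))^2"
      proof (rule add_mono)
        show "(\<delta> * cnorm k)^2 \<le> (cnorm u)^2" using ub \<delta> cnorm_nonneg[of k]
          by (intro power_mono) auto
        show "(\<delta> * cmod c)^2 \<le> (cmod c * cmod (cinner (T y) y - l0))^2"
        proof (rule power_mono)
          have "\<delta> * cmod c \<le> cmod (cinner (T y) y - l0) * cmod c"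
            using muy norm_ge_zero[of c] by (rule mult_right_mono)
          then show "\<delta> * cmod c \<le> cmod c * cmod (cinner (T y) y - l0)" by (simp add: mult.commute)
          show "0 \<le> \<delta> * cmod c" using \<delta> by simp
        qed
      qed
      finally have "(\<delta> * cnorm h)^2 \<le> (cnorm (proj K' (T h) - l0 *\<^sub>C h))^2" unfolding n1 .
      then show "\<delta> * cnorm h \<le> cnorm (proj K' (T h) - l0 *\<^sub>C h)"
        using cnorm_nonneg by (meson power2_le_imp_le)
    qed
  qed
qed

definition tadj :: "'a::complex_inner set \<Rightarrow> ('a \<Rightarrow> 'a) \<Rightarrow> 'a \<Rightarrow> 'a" where
  "tadj D T y = (SOME z. \<forall>x\<in>D. cinner (T x) y = cinner x z)"

lemma tadj: "y \<in> adj_dom D T \<Longrightarrow> x \<in> D \<Longrightarrow> cinner (T x) y = cinner x (tadj D T y)"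
  unfolding adj_dom_def tadj_def by (rule someI_ex[where P = "\<lambda>z. \<forall>x\<in>D. cinner (T x) y = cinner x z", rule_format]) auto

lemma cspan_Un_span: "cspan (cspan A \<union> S) = cspan (A \<union> S)"
proof
  show "cspan (cspan A \<union> S) \<subseteq> cspan (A \<union> S)"
    by (rule cspan_minimal) (auto intro: cspan_base cspan_mono[THEN subsetD, of A "A \<union> S"])
  show "cspan (A \<union> S) \<subseteq> cspan (cspan A \<union> S)"
    by (rule cspan_mono) (auto intro: cspan_base)
qed

lemma extend:
  assumes T: "clinear_on D T" and V: "fin_dim_subspace V" "V \<subseteq> D"
    and A: "A \<longrightarrow> D \<subseteq> adj_dom D T"
    and hyp: "\<forall>\<omega>\<in>set ws. \<forall>U. fin_dim_subspace U \<longrightarrow> (\<exists>x. x \<in> orth U \<inter> D \<and> cnorm x = 1 \<and> Q \<omega> (cinner (T x) x))"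
  shows "\<exists>xs. good T D A V xs \<and> list_all2 (\<lambda>\<omega> x. Q \<omega> (cinner (T x) x)) ws xs"
  using hyp
proof (induction ws rule: rev_induct)
  case Nil
  show ?case by (intro exI[of _ "[]"]) (simp add: gNil)
next
  case (snoc \<omega> ws)
  obtain xs where xs: "good T D A V xs" "list_all2 (\<lambda>\<omega> x. Q \<omega> (cinner (T x) x)) ws xs"
    using snoc by auto
  obtain BV where BV: "finite BV" "V = cspan BV" using V(1) by (rule fin_dimE)
  define B where "B = BV \<union> set xs"
  have finB: "finite B" unfolding B_def using BV(1) by simp
  have KB: "cspan (V \<union> set xs) = cspan B" unfolding B_def BV(2) by (rule cspan_Un_span)
  have BD: "B \<subseteq> D" unfolding B_def using good_basic[OF T V xs(1)] V(2) BV(2) cspan_base by blast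
  define U where "U = cspan (B \<union> T ` B \<union> tadj D T ` B)"
  have U: "fin_dim_subspace U" unfolding U_def using finB by (intro fin_dim_cspan) simp
  obtain x where x: "x \<in> orth U" "x \<in> D" "cnorm x = 1" "Q \<omega> (cinner (T x) x)"
    using snoc.prems U by auto
  have xU: "\<And>u. u \<in> B \<union> T ` B \<union> tadj D T ` B \<Longrightarrow> cinner x u = 0"
  proof -
    fix u assume "u \<in> B \<union> T ` B \<union> tadj D T ` B"
    then have "u \<in> U" unfolding U_def by (rule cspan_base)
    then show "cinner x u = 0" using x(1) unfolding orth_def by blast
  qed
  have c1: "\<forall>k\<in>cspan B. cinner x k = 0"
  proof -
    have "x \<in> orth B" using xU unfolding orth_def by blast
    then show ?thesis using orth_cspan unfolding orth_def by blast
  qed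
  have c2: "\<forall>k\<in>cspan B. cinner (T k) x = 0"
  proof -
    have "B \<subseteq> {k \<in> D. cinner (T k) x = 0}" using BD xU cinner_swap0 by blast
    then have "cspan B \<subseteq> {k \<in> D. cinner (T k) x = 0}" using cspan_minimal csubspace_T_orth[OF T] by blast
    then show ?thesis by blast
  qed
  have c3: "A \<longrightarrow> (\<forall>k\<in>cspan B. cinner (T x) k = 0)"
  proof
    assume a: A
    have "B \<subseteq> {k. cinner (T x) k = 0}"
    proof
      fix b assume b: "b \<in> B"
      have "b \<in> adj_dom D T" using A a BD b by blast
      then have "cinner (T x) b = cinner x (tadj D T b)" using tadj x(2) by blast
      also have "\<dots> = 0" using xU b by blast
      finally show "b \<in> {k. cinner (T x) k = 0}" by simp
    qed
    then have "cspan B \<subseteq> {k. cinner (T x) k = 0}" using cspan_minimal csubspace_orth_right by blast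
    then show "\<forall>k\<in>cspan B. cinner (T x) k = 0" by blast
  qed
  have "good T D A V (xs @ [x])"
    by (rule gSnoc[OF xs(1) x(2) x(3)]) (use c1 c2 c3 KB in auto)
  moreover have "list_all2 (\<lambda>\<omega> x. Q \<omega> (cinner (T x) x)) (ws @ [\<omega>]) (xs @ [x])"
    using xs(2) x(4) by (simp add: list_all2_appendI)
  ultimately show ?case by blast
qed

lemma est:
  assumes T: "clinear_on D T" and H: "fin_dim_subspace H" "H \<subseteq> D" and V: "fin_dim_subspace V" "V \<subseteq> H"
    and lV: "l0 \<in> resolvent_set V V (compr V T)"
    and PV: "\<forall>v\<in>V. proj H (T v) = proj V (T v)"
    and \<delta>: "\<delta> > 0"
    and LB: "\<forall>h\<in>H. proj H (T h) - l0 *\<^sub>C h \<in> orth V \<longrightarrow> \<delta> * cnorm h \<le> cnorm (proj H (T h) - l0 *\<^sub>C h)"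
  shows "l0 \<in> resolvent_set H H (compr H T)"
    "\<delta> * cnorm (resolvent H (compr H T) l0 (proj H x) - resolvent V (compr V T) l0 (proj V x)) \<le> cnorm (x - proj V x)"
proof -
  have Hs: "csubspace H" and Hp: "has_proj H" using H fin_dim_csubspace fin_dim_has_proj by auto
  have Vs: "csubspace V" and Vp: "has_proj V" using V fin_dim_csubspace fin_dim_has_proj by auto
  have VD: "V \<subseteq> D" using V(2) H(2) by blast
  have cl: "clinear_on H (compr H T)" "\<forall>h\<in>H. compr H T h \<in> H" using compr_linear[OF T H] by auto
  define f where "f = (\<lambda>x. compr H T x - l0 *\<^sub>C x)"
  have f: "clinear_on H f" unfolding f_def by (rule clinear_on_shift[OF cl(1)])
  show lH: "l0 \<in> resolvent_set H H (compr H T)"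
    unfolding fd_resolvent_set[OF H(1) cl]
  proof (intro ballI impI)
    fix h assume h: "h \<in> H" "compr H T h - l0 *\<^sub>C h = 0"
    then have "\<delta> * cnorm h \<le> 0" using LB csubspace_0[OF csubspace_orth] unfolding compr_def by force
    then have "cnorm h = 0" using \<delta> cnorm_nonneg[of h] by (simp add: mult_le_0_iff)
    then show "h = 0" by (simp add: cnorm_eq_zero)
  qed
  have bH: "bij_betw f H H" using lH unfolding resolvent_set_def f_def by blast
  have bV: "bij_betw (\<lambda>x. compr V T x - l0 *\<^sub>C x) V V" using lV unfolding resolvent_set_def by blast
  define u where "u = resolvent V (compr V T) l0 (proj V x)"
  define r where "r = resolvent H (compr H T) l0 (proj H x)"
  have PVx: "proj V x \<in> V" using proj_props(1)[OF Vs Vp] .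
  have PHx: "proj H x \<in> H" using proj_props(1)[OF Hs Hp] .
  have uV: "u \<in> V" unfolding u_def resolvent_def using bV PVx
    by (auto simp: bij_betw_def inv_into_into)
  have "(\<lambda>x. compr V T x - l0 *\<^sub>C x) u = proj V x" unfolding u_def resolvent_def
    by (rule f_inv_into_f) (use bV PVx in \<open>auto simp: bij_betw_def\<close>)
  then have fu: "compr V T u - l0 *\<^sub>C u = proj V x" by simp
  have rH: "r \<in> H" unfolding r_def resolvent_def f_def[symmetric] using bH PHx
    by (auto simp: bij_betw_def inv_into_into)
  have fr: "f r = proj H x" unfolding r_def resolvent_def f_def[symmetric]
    by (rule f_inv_into_f) (use bH PHx in \<open>auto simp: bij_betw_def\<close>)
  have uH: "u \<in> H" using uV V(2) by blast
  have fu2: "f u = proj V x" using fu PV uV unfolding f_def compr_def by simp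
  have hH: "r - u \<in> H" using csubspace_diff[OF Hs rH uH] .
  have fh: "f (r - u) = proj H x - proj V x" using clin_diff[OF f rH uH] fr fu2 by simp
  have wV: "proj H x - proj V x \<in> orth V"
    unfolding orth_def
  proof (intro CollectI ballI)
    fix v assume v: "v \<in> V"
    have "proj H x - proj V x = (x - proj V x) - (x - proj H x)" by simp
    then show "cinner (proj H x - proj V x) v = 0"
      using proj_props(2)[OF Vs Vp v] proj_props(2)[OF Hs Hp, of v x] v V(2)
      by (simp add: cinner_diff_left subset_iff)
  qed
  have "\<delta> * cnorm (r - u) \<le> cnorm (f (r - u))"
    using LB[rule_format, OF hH] fh wV unfolding f_def compr_def by simp
  also have "\<dots> = cnorm (proj H x - proj V x)" using fh by simp
  also have "proj H x - proj V x = proj H (x - proj V x)"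
    using proj_diff[OF Hs Hp] proj_id[OF Hs] PVx V(2) by (simp add: subset_iff)
  also have "cnorm \<dots> \<le> cnorm (x - proj V x)" using proj_norm_le[OF Hs Hp] .
  finally show "\<delta> * cnorm (resolvent H (compr H T) l0 (proj H x) - resolvent V (compr V T) l0 (proj V x)) \<le> cnorm (x - proj V x)"
    unfolding r_def u_def .
qed

lemma LB_a1:
  assumes T: "clinear_on D T" and l0: "l0 \<notin> closure (numrange D T)"
  shows "\<exists>\<delta>>0. \<forall>H. fin_dim_subspace H \<longrightarrow> H \<subseteq> D \<longrightarrow>
            (\<forall>h\<in>H. \<delta> * cnorm h \<le> cnorm (proj H (T h) - l0 *\<^sub>C h))"
proof -
  define N where "N = numrange D T"
  define \<delta> where "\<delta> = (if N = {} then 1 else infdist l0 (closure N))"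
  have \<delta>: "\<delta> > 0" unfolding \<delta>_def using l0 infdist_pos_not_in_closed[of "closure N" l0] unfolding N_def
    by auto
  have main: "\<delta> * cnorm h \<le> cnorm (proj H (T h) - l0 *\<^sub>C h)"
    if H: "fin_dim_subspace H" "H \<subseteq> D" and h: "h \<in> H" for H h
  proof (cases "h = 0")
    case True then show ?thesis by (simp add: cnorm_nonneg)
  next
    case False
    have Hs: "csubspace H" and Hp: "has_proj H" using H fin_dim_csubspace fin_dim_has_proj by auto
    have hD: "h \<in> D" using h H(2) by blast
    have nh: "cnorm h > 0" using cnorm_pos[OF False] .
    define h' where "h' = complex_of_real (1 / cnorm h) *\<^sub>C h"
    have h'D: "h' \<in> D" unfolding h'_def using csubspace_scale[OF clin_sub[OF T] hD] .
    have h'n: "cnorm h' = 1" unfolding h'_def cnorm_scaleC using nh by (simp add: norm_divide)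
    define \<mu> where "\<mu> = cinner (T h') h'"
    have muN: "\<mu> \<in> N" unfolding N_def numrange_def \<mu>_def using h'D h'n by blast
    have "\<delta> \<le> dist l0 \<mu>" unfolding \<delta>_def using muN infdist_le[of \<mu> "closure N" l0] closure_subset by auto
    then have d: "\<delta> \<le> cmod (\<mu> - l0)" by (simp add: dist_norm norm_minus_commute)
    have hh': "h = complex_of_real (cnorm h) *\<^sub>C h'" unfolding h'_def using nh by (simp add: scaleC_scaleC scaleC_one)
    have Thh: "cinner (T h) h = complex_of_real ((cnorm h)^2) * \<mu>"
      unfolding \<mu>_def using clin_scale[OF T h'D] hh'
      by (metis (no_types) cinner_scaleC_left cinner_scaleC_right complex_cnj_complex_of_real mult.assoc
          mult.commute of_real_mult power2_eq_square)
    have PT: "cinner (proj H (T h)) h = cinner (T h) h"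
      using proj_props(2)[OF Hs Hp h, of "T h"] by (simp add: cinner_diff_left)
    have "cinner (proj H (T h) - l0 *\<^sub>C h) h = complex_of_real ((cnorm h)^2) * (\<mu> - l0)"
      using PT Thh cnorm_sq_c[of h] by (simp add: cinner_diff_left cinner_scaleC_left algebra_simps)
    then have "(cnorm h)^2 * cmod (\<mu> - l0) \<le> cnorm (proj H (T h) - l0 *\<^sub>C h) * cnorm h"
      using cauchy_schwarz[of "proj H (T h) - l0 *\<^sub>C h" h] by (simp add: norm_mult norm_power)
    then have "(cnorm h)^2 * \<delta> \<le> cnorm (proj H (T h) - l0 *\<^sub>C h) * cnorm h"
      using d by (meson mult_left_mono order_trans zero_le_power2)
    then show ?thesis using nh by (simp add: power2_eq_square mult.commute mult.left_commute)
  qed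
  show ?thesis using \<delta> main by blast
qed

lemma LB_a2:
  assumes T: "clinear_on D T" and H: "fin_dim_subspace H" "H \<subseteq> D" and V: "fin_dim_subspace V" "V \<subseteq> H"
    and lV: "l0 \<in> resolvent_set V V (compr V T)"
    and PV: "\<forall>v\<in>V. proj H (T v) = proj V (T v)"
    and inv2: "\<forall>h\<in>H. h \<in> orth V \<longrightarrow> proj H (T h) - l0 *\<^sub>C h \<in> orth V \<and> \<delta> * cnorm h \<le> cnorm (proj H (T h) - l0 *\<^sub>C h)"
  shows "\<forall>h\<in>H. proj H (T h) - l0 *\<^sub>C h \<in> orth V \<longrightarrow> \<delta> * cnorm h \<le> cnorm (proj H (T h) - l0 *\<^sub>C h)"
proof (intro ballI impI)
  fix h assume h: "h \<in> H" and fh: "proj H (T h) - l0 *\<^sub>C h \<in> orth V"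
  have Vs: "csubspace V" and Vp: "has_proj V" using V fin_dim_csubspace fin_dim_has_proj by auto
  have Hs: "csubspace H" using H fin_dim_csubspace by auto
  have VD: "V \<subseteq> D" using V(2) H(2) by blast
  have cl: "clinear_on H (compr H T)" using compr_linear[OF T H] by auto
  define f where "f = (\<lambda>x. compr H T x - l0 *\<^sub>C x)"
  have f: "clinear_on H f" unfolding f_def by (rule clinear_on_shift[OF cl])
  have injV: "\<forall>v\<in>V. compr V T v - l0 *\<^sub>C v = 0 \<longrightarrow> v = 0"
    using fd_resolvent_set[OF V(1) compr_linear[OF T V(1) VD]] lV by blast
  define v where "v = proj V h"
  have vV: "v \<in> V" unfolding v_def using proj_props(1)[OF Vs Vp] .
  have vH: "v \<in> H" using vV V(2) by blast
  have h'H: "h - v \<in> H" using csubspace_diff[OF Hs h vH] .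
  have h'V: "h - v \<in> orth V" unfolding v_def orth_def using proj_props(2)[OF Vs Vp] by blast
  have fv: "f v \<in> V" unfolding f_def compr_def using PV vV proj_props(1)[OF Vs Vp] csubspace_diff[OF Vs] csubspace_scale[OF Vs]
    by simp
  have "f v = f h - f (h - v)" using clin_diff[OF f h vH] clin_diff[OF f h h'H] by simp
  moreover have "f h \<in> orth V" using fh unfolding f_def compr_def .
  moreover have "f (h - v) \<in> orth V" using inv2 h'H h'V unfolding f_def compr_def by blast
  ultimately have "f v \<in> orth V" using csubspace_diff[OF csubspace_orth] by metis
  then have "cinner (f v) (f v) = 0" using fv unfolding orth_def by blast
  then have "f v = 0" using cinner_eq_zero_iff by blast
  then have "v = 0" using injV vV PV unfolding f_def compr_def by simp
  then show "\<delta> * cnorm h \<le> cnorm (proj H (T h) - l0 *\<^sub>C h)" using inv2 h h'V by simp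
qed

lemma la2_right: "list_all2 P ws xs \<Longrightarrow> x \<in> set xs \<Longrightarrow> \<exists>w\<in>set ws. P w x"
  by (induction rule: list_all2_induct) auto
lemma la2_left: "list_all2 P ws xs \<Longrightarrow> w \<in> set ws \<Longrightarrow> \<exists>x\<in>set xs. P w x"
  by (induction rule: list_all2_induct) auto

lemma per_n:
  fixes T :: "'a::chilbert \<Rightarrow> 'a"
  assumes T: "clinear_on D T" and V: "fin_dim_subspace V" "V \<subseteq> D"
    and A: "A \<longrightarrow> D \<subseteq> adj_dom D T"
    and Om: "compact \<Omega>" "\<Omega> \<subseteq> W_e1 D T" and r: "0 < r" "r \<le> \<rho>"
  shows "\<exists>xs. good T D A V xs \<and> (\<forall>x\<in>set xs. \<exists>\<omega>\<in>\<Omega>. dist (cinner (T x) x) \<omega> < \<rho>)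
     \<and> (\<forall>l\<in>\<Omega>. \<exists>x\<in>set xs. dist (cinner (T x) x) l < 2 * r)
     \<and> (finite \<Omega> \<and> \<Omega> \<subseteq> interior (W_e1 D T) \<longrightarrow> (\<lambda>x. cinner (T x) x) ` set xs = \<Omega>)"
proof (cases "finite \<Omega> \<and> \<Omega> \<subseteq> interior (W_e1 D T)")
  case True
  obtain ws where ws: "set ws = \<Omega>" using finite_list True by blast
  have hyp: "\<forall>\<omega>\<in>set ws. \<forall>U::'a set. fin_dim_subspace U \<longrightarrow> (\<exists>x. x \<in> orth U \<inter> D \<and> cnorm x = 1 \<and> (\<lambda>\<omega> \<mu>. \<mu> = \<omega>) \<omega> (cinner (T x) x))"
  proof (intro ballI allI impI)
    fix \<omega> and U :: "'a set" assume "\<omega> \<in> set ws" "fin_dim_subspace U"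
    then have "\<omega> \<in> numrange (orth U \<inter> D) T" using interior_We1[OF T] True ws by blast
    then show "\<exists>x. x \<in> orth U \<inter> D \<and> cnorm x = 1 \<and> (\<lambda>\<omega> \<mu>. \<mu> = \<omega>) \<omega> (cinner (T x) x)"
      unfolding numrange_def by auto
  qed
  obtain xs where xs: "good T D A V xs" "list_all2 (\<lambda>\<omega> x. cinner (T x) x = \<omega>) ws xs"
    using extend[OF T V A hyp] by auto
  have "list_all2 (=) ws (map (\<lambda>x. cinner (T x) x) xs)" using xs(2) by (simp add: list_all2_map2 eq_commute)
  then have "ws = map (\<lambda>x. cinner (T x) x) xs" by (simp add: list_all2_eq[symmetric])
  then have img: "(\<lambda>x. cinner (T x) x) ` set xs = \<Omega>" using ws by simp
  show ?thesis
  proof (intro exI[of _ xs] conjI)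
    show "good T D A V xs" by (rule xs(1))
    show "\<forall>x\<in>set xs. \<exists>\<omega>\<in>\<Omega>. dist (cinner (T x) x) \<omega> < \<rho>" using img r by force
    show "\<forall>l\<in>\<Omega>. \<exists>x\<in>set xs. dist (cinner (T x) x) l < 2 * r" using img r by force
    show "finite \<Omega> \<and> \<Omega> \<subseteq> interior (W_e1 D T) \<longrightarrow> (\<lambda>x. cinner (T x) x) ` set xs = \<Omega>" using img by blast
  qed
next
  case False
  obtain F where F: "F \<subseteq> \<Omega>" "finite F" "\<Omega> \<subseteq> (\<Union>c\<in>F. ball c r)"
    using compactE_image[OF Om(1), of \<Omega> "\<lambda>c. ball c r"] r(1) by force
  obtain ws where ws: "set ws = F" using finite_list F(2) by blast
  have hyp: "\<forall>\<omega>\<in>set ws. \<forall>U::'a set. fin_dim_subspace U \<longrightarrow> (\<exists>x. x \<in> orth U \<inter> D \<and> cnorm x = 1 \<and> (\<lambda>\<omega> \<mu>. dist \<mu> \<omega> < r) \<omega> (cinner (T x) x))"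
  proof (intro ballI allI impI)
    fix \<omega> and U :: "'a set" assume "\<omega> \<in> set ws" "fin_dim_subspace U"
    then show "\<exists>x. x \<in> orth U \<inter> D \<and> cnorm x = 1 \<and> (\<lambda>\<omega> \<mu>. dist \<mu> \<omega> < r) \<omega> (cinner (T x) x)"
      using We1_approx[of U \<omega> D T r] Om(2) F(1) ws r(1) by auto
  qed
  obtain xs where xs: "good T D A V xs" "list_all2 (\<lambda>\<omega> x. dist (cinner (T x) x) \<omega> < r) ws xs"
    using extend[OF T V A hyp] by auto
  show ?thesis
  proof (intro exI[of _ xs] conjI)
    show "good T D A V xs" by (rule xs(1))
    show "\<forall>x\<in>set xs. \<exists>\<omega>\<in>\<Omega>. dist (cinner (T x) x) \<omega> < \<rho>"
    proof
      fix x assume "x \<in> set xs"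
      then obtain w where "w \<in> set ws" "dist (cinner (T x) x) w < r" using la2_right[OF xs(2)] by blast
      then show "\<exists>\<omega>\<in>\<Omega>. dist (cinner (T x) x) \<omega> < \<rho>" using ws F(1) r(2) by force
    qed
    show "\<forall>l\<in>\<Omega>. \<exists>x\<in>set xs. dist (cinner (T x) x) l < 2 * r"
    proof
      fix l assume "l \<in> \<Omega>"
      then obtain c where c: "c \<in> F" "dist c l < r" using F(3) by auto
      then obtain x where x: "x \<in> set xs" "dist (cinner (T x) x) c < r" using la2_left[OF xs(2)] ws by blast
      have "dist (cinner (T x) x) l \<le> dist (cinner (T x) x) c + dist c l" by (rule dist_triangle)
      then show "\<exists>x\<in>set xs. dist (cinner (T x) x) l < 2 * r" using x c by force
    qed
    show "finite \<Omega> \<and> \<Omega> \<subseteq> interior (W_e1 D T) \<longrightarrow> (\<lambda>x. cinner (T x) x) ` set xs = \<Omega>" using False by blast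
  qed
qed

lemma main_build:
  fixes T :: "'a::chilbert \<Rightarrow> 'a"
  assumes T: "clinear_on D T" and V: "\<And>n. fin_dim_subspace (V n)" "\<And>n. V n \<subseteq> D"
    and Vc: "proj_strong_to_id V"
    and A: "A \<longrightarrow> D \<subseteq> adj_dom D T"
    and Om: "compact \<Omega>" "\<Omega> \<subseteq> W_e1 D T" and \<rho>: "0 < \<rho>"
  shows "\<exists>Hs :: nat \<Rightarrow> 'a set.
           (\<forall>n. fin_dim_subspace (Hs n) \<and> Hs n \<subseteq> D \<and> V n \<subseteq> Hs n) \<and>
           proj_strong_to_id Hs \<and>
           (\<forall>e>0. \<exists>N. \<forall>n\<ge>N. \<forall>l\<in>\<Omega>. infdist l (compr_spectrum (Hs n) T) < e) \<and>
           (finite \<Omega> \<and> \<Omega> \<subseteq> interior (W_e1 D T) \<longrightarrow>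
              (\<forall>n. compr_spectrum (Hs n) T = compr_spectrum (V n) T \<union> \<Omega>)) \<and>
           (\<forall>n. \<exists>xs. good T D A (V n) xs \<and> Hs n = cspan (V n \<union> set xs) \<and>
                 (\<forall>x\<in>set xs. \<exists>\<omega>\<in>\<Omega>. dist (cinner (T x) x) \<omega> < \<rho>))"
proof -
  define r where "r = (\<lambda>n::nat. min (1 / real (Suc n)) \<rho>)"
  have r: "0 < r n" "r n \<le> \<rho>" "r n \<le> 1 / real (Suc n)" for n unfolding r_def using \<rho> by auto
  define Q where "Q = (\<lambda>n xs. good T D A (V n) xs \<and> (\<forall>x\<in>set xs. \<exists>\<omega>\<in>\<Omega>. dist (cinner (T x) x) \<omega> < \<rho>)
     \<and> (\<forall>l\<in>\<Omega>. \<exists>x\<in>set xs. dist (cinner (T x) x) l < 2 * r n)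
     \<and> (finite \<Omega> \<and> \<Omega> \<subseteq> interior (W_e1 D T) \<longrightarrow> (\<lambda>x. cinner (T x) x) ` set xs = \<Omega>))"
  have ex: "\<forall>n. \<exists>xs. Q n xs" unfolding Q_def
    using per_n[OF T V(1) V(2) A Om r(1) r(2)] by blast
  from choice[OF ex] obtain xsf where all: "\<forall>n. Q n (xsf n)" by blast
  have xsf: "\<And>n. good T D A (V n) (xsf n)"
    "\<And>n. \<forall>x\<in>set (xsf n). \<exists>\<omega>\<in>\<Omega>. dist (cinner (T x) x) \<omega> < \<rho>"
    "\<And>n. \<forall>l\<in>\<Omega>. \<exists>x\<in>set (xsf n). dist (cinner (T x) x) l < 2 * r n"
    "\<And>n. finite \<Omega> \<and> \<Omega> \<subseteq> interior (W_e1 D T) \<longrightarrow> (\<lambda>x. cinner (T x) x) ` set (xsf n) = \<Omega>"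
    using all unfolding Q_def by auto
  define Hs where "Hs = (\<lambda>n. cspan (V n \<union> set (xsf n)))"
  have basic: "fin_dim_subspace (Hs n)" "Hs n \<subseteq> D" "V n \<subseteq> Hs n" for n
  proof -
    show "fin_dim_subspace (Hs n)" "Hs n \<subseteq> D"
      using good_basic[OF T V(1) V(2) xsf(1)] unfolding Hs_def by auto
    show "V n \<subseteq> Hs n" unfolding Hs_def by (rule V_sub_span)
  qed
  have spec: "compr_spectrum (Hs n) T = compr_spectrum (V n) T \<union> (\<lambda>x. cinner (T x) x) ` set (xsf n)" for n
    unfolding compr_spectrum_eigs[OF T basic(1,2)] compr_spectrum_eigs[OF T V(1) V(2)]
    unfolding Hs_def using good_eigs[OF T V(1) V(2) xsf(1)] .
  show ?thesis
  proof (intro exI[of _ Hs] conjI)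
    show "\<forall>n. fin_dim_subspace (Hs n) \<and> Hs n \<subseteq> D \<and> V n \<subseteq> Hs n" using basic by blast
  next
    show "proj_strong_to_id Hs" unfolding proj_strong_to_id_def
    proof
      fix x
      have le: "cnorm (proj (Hs n) x - x) \<le> cnorm (proj (V n) x - x)" for n
        using proj_best[OF fin_dim_csubspace[OF V(1)] fin_dim_has_proj[OF V(1)]
          fin_dim_csubspace[OF basic(1)] fin_dim_has_proj[OF basic(1)] basic(3), of x]
        by (simp add: cnorm_minus_commute)
      have ev0: "eventually (\<lambda>n. 0 \<le> cnorm (proj (Hs n) x - x)) sequentially" by (simp add: cnorm_nonneg)
      have ev1: "eventually (\<lambda>n. cnorm (proj (Hs n) x - x) \<le> cnorm (proj (V n) x - x)) sequentially"
        using le by simp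
      show "(\<lambda>n. cnorm (proj (Hs n) x - x)) \<longlonglongrightarrow> 0"
        using tendsto_sandwich[OF ev0 ev1 tendsto_const[of 0]] Vc[unfolded proj_strong_to_id_def] by blast
    qed
  next
    show "\<forall>e>0. \<exists>N. \<forall>n\<ge>N. \<forall>l\<in>\<Omega>. infdist l (compr_spectrum (Hs n) T) < e"
    proof (intro allI impI)
    fix e :: real assume e: "e > 0"
    obtain N where N: "inverse (real (Suc N)) < e / 2" using reals_Archimedean[of "e/2"] e by auto
    show "\<exists>N. \<forall>n\<ge>N. \<forall>l\<in>\<Omega>. infdist l (compr_spectrum (Hs n) T) < e"
    proof (intro exI[of _ N] allI impI ballI)
      fix n l assume n: "N \<le> n" and l: "l \<in> \<Omega>"
      obtain x where x: "x \<in> set (xsf n)" "dist (cinner (T x) x) l < 2 * r n" using xsf(3) l by blast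
      have "infdist l (compr_spectrum (Hs n) T) \<le> dist l (cinner (T x) x)"
        using infdist_le[of "cinner (T x) x"] spec x(1) by blast
      also have "\<dots> < 2 * r n" using x(2) by (simp add: dist_commute)
      also have "2 * r n \<le> 2 * (1 / real (Suc n))" using r(3)[of n] by simp
      also have "1 / real (Suc n) \<le> inverse (real (Suc N))" using n by (simp add: field_simps)
      finally show "infdist l (compr_spectrum (Hs n) T) < e" using N by simp
    qed
    qed
  next
    show "finite \<Omega> \<and> \<Omega> \<subseteq> interior (W_e1 D T) \<longrightarrow>
              (\<forall>n. compr_spectrum (Hs n) T = compr_spectrum (V n) T \<union> \<Omega>)" using spec xsf(4) by simp
  next
    show "\<forall>n. \<exists>xs. good T D A (V n) xs \<and> Hs n = cspan (V n \<union> set xs) \<and>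
                 (\<forall>x\<in>set xs. \<exists>\<omega>\<in>\<Omega>. dist (cinner (T x) x) \<omega> < \<rho>)"
      using xsf(1,2) unfolding Hs_def by blast
  qed
qed

lemma gsr_conclude:
  assumes gsr: "compr_gsr_with V D T n0 l0" and Vc: "proj_strong_to_id V"
    and H: "\<forall>n\<ge>n0. l0 \<in> resolvent_set (H n) (H n) (compr (H n) T)"
    and c: "c \<ge> 0"
    and est: "\<forall>n\<ge>n0. \<forall>x. cnorm (resolvent (H n) (compr (H n) T) l0 (proj (H n) x) - resolvent (V n) (compr (V n) T) l0 (proj (V n) x))
                  \<le> c * cnorm (x - proj (V n) x)"
  shows "compr_gsr_with H D T n0 l0"
proof -
  have g: "(\<forall>n\<ge>n0. l0 \<in> resolvent_set (V n) (V n) (compr (V n) T)) \<and> l0 \<in> resolvent_set UNIV D T \<and>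
     (\<forall>x. (\<lambda>n. cnorm (resolvent (V n) (compr (V n) T) l0 (proj (V n) x) - resolvent D T l0 x)) \<longlonglongrightarrow> 0)"
    using gsr unfolding compr_gsr_with_def gsr_with_def .
  show ?thesis unfolding compr_gsr_with_def gsr_with_def
  proof (intro conjI allI impI)
    fix n assume "n0 \<le> n" then show "l0 \<in> resolvent_set (H n) (H n) (compr (H n) T)" using H by blast
  next
    show "l0 \<in> resolvent_set UNIV D T" using g by blast
  next
    fix x
    let ?a = "\<lambda>n. resolvent (H n) (compr (H n) T) l0 (proj (H n) x)"
    let ?b = "\<lambda>n. resolvent (V n) (compr (V n) T) l0 (proj (V n) x)"
    let ?c = "resolvent D T l0 x"
    have t1: "(\<lambda>n. cnorm (?b n - ?c)) \<longlonglongrightarrow> 0" using g by blast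
    have t2: "(\<lambda>n. c * cnorm (x - proj (V n) x)) \<longlonglongrightarrow> 0"
      using Vc unfolding proj_strong_to_id_def by (auto simp: cnorm_minus_commute intro: tendsto_mult_right_zero)
    have ev: "eventually (\<lambda>n. cnorm (?a n - ?c) \<le> c * cnorm (x - proj (V n) x) + cnorm (?b n - ?c)) sequentially"
    proof (rule eventually_sequentiallyI[of n0])
      fix n assume n: "n0 \<le> n"
      have "cnorm (?a n - ?c) \<le> cnorm (?a n - ?b n) + cnorm (?b n - ?c)"
        using cnorm_triangle[of "?a n - ?b n" "?b n - ?c"] by simp
      moreover have "cnorm (?a n - ?b n) \<le> c * cnorm (x - proj (V n) x)" using est n by blast
      ultimately show "cnorm (?a n - ?c) \<le> c * cnorm (x - proj (V n) x) + cnorm (?b n - ?c)"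
        by linarith
    qed
    have ev0: "eventually (\<lambda>n. 0 \<le> cnorm (?a n - ?c)) sequentially" by (simp add: cnorm_nonneg)
    show "(\<lambda>n. cnorm (?a n - ?c)) \<longlonglongrightarrow> 0"
      using tendsto_sandwich[OF ev0 ev tendsto_const[of 0]] tendsto_add[OF t2 t1] by simp
  qed
qed

theorem theorem6p4:
  fixes T :: "'a::chilbert \<Rightarrow> 'a" and D :: "'a set" and V :: "nat \<Rightarrow> 'a set"
    and \<Omega> :: "complex set"
  assumes H_sep: "separable_hilbert TYPE('a)"
    and H_inf: "infinite_dim TYPE('a)"
    and T_lin: "clinear_on D T"
    and D_dense: "dense_set D"
    and V_fd: "\<And>n. fin_dim_subspace (V n)"
    and V_dom: "\<And>n. V n \<subseteq> D"
    and V_conv: "proj_strong_to_id V"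
    and \<Omega>_compact: "compact \<Omega>"
    and \<Omega>_sub: "\<Omega> \<subseteq> W_e1 D T"
  shows "\<exists>Hs :: nat \<Rightarrow> 'a set.
           (\<forall>n. fin_dim_subspace (Hs n) \<and> Hs n \<subseteq> D \<and> V n \<subseteq> Hs n) \<and>
           proj_strong_to_id Hs \<and>
           (\<forall>e>0. \<exists>N. \<forall>n\<ge>N. \<forall>l\<in>\<Omega>. infdist l (compr_spectrum (Hs n) T) < e) \<and>
           (finite \<Omega> \<and> \<Omega> \<subseteq> interior (W_e1 D T) \<longrightarrow>
              (\<forall>n. compr_spectrum (Hs n) T = compr_spectrum (V n) T \<union> \<Omega>)) \<and>
           ((numrange D T \<noteq> UNIV \<or> D \<subseteq> adj_dom D T) \<and>
            (\<exists>n0 l0. compr_gsr_with V D T n0 l0 \<and>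
                (numrange D T \<noteq> UNIV \<longrightarrow> l0 \<notin> closure (numrange D T)) \<and>
                (numrange D T = UNIV \<longrightarrow> l0 \<notin> \<Omega>))
            \<longrightarrow> compr_gsr Hs D T)"
proof -
  let ?N = "numrange D T"
  let ?FI = "finite \<Omega> \<and> \<Omega> \<subseteq> interior (W_e1 D T)"
  let ?P = "(?N \<noteq> UNIV \<or> D \<subseteq> adj_dom D T) \<and>
            (\<exists>n0 l0. compr_gsr_with V D T n0 l0 \<and>
                (?N \<noteq> UNIV \<longrightarrow> l0 \<notin> closure ?N) \<and>
                (?N = UNIV \<longrightarrow> l0 \<notin> \<Omega>))"
  have Vc: "\<And>n. csubspace (V n)" "\<And>n. has_proj (V n)" using V_fd fin_dim_csubspace fin_dim_has_proj by auto
  show ?thesis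
  proof (cases ?P)
    case False
    obtain Hs where Hs: "\<forall>n. fin_dim_subspace (Hs n) \<and> Hs n \<subseteq> D \<and> V n \<subseteq> Hs n" "proj_strong_to_id Hs"
      "\<forall>e>0. \<exists>N. \<forall>n\<ge>N. \<forall>l\<in>\<Omega>. infdist l (compr_spectrum (Hs n) T) < e"
      "?FI \<longrightarrow> (\<forall>n. compr_spectrum (Hs n) T = compr_spectrum (V n) T \<union> \<Omega>)"
      using main_build[OF T_lin V_fd V_dom V_conv _ \<Omega>_compact \<Omega>_sub, of False 1] by auto
    show ?thesis using Hs False by blast
  next
    case True
    then obtain n0 l0 where g: "compr_gsr_with V D T n0 l0" "?N \<noteq> UNIV \<longrightarrow> l0 \<notin> closure ?N"
      "?N = UNIV \<longrightarrow> l0 \<notin> \<Omega>" by blast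
    have lV: "\<And>n. n0 \<le> n \<Longrightarrow> l0 \<in> resolvent_set (V n) (V n) (compr (V n) T)"
      using g(1) unfolding compr_gsr_with_def gsr_with_def by blast
    show ?thesis
    proof (cases "?N = UNIV")
      case False
      obtain Hs where Hs: "\<forall>n. fin_dim_subspace (Hs n) \<and> Hs n \<subseteq> D \<and> V n \<subseteq> Hs n" "proj_strong_to_id Hs"
        "\<forall>e>0. \<exists>N. \<forall>n\<ge>N. \<forall>l\<in>\<Omega>. infdist l (compr_spectrum (Hs n) T) < e"
        "?FI \<longrightarrow> (\<forall>n. compr_spectrum (Hs n) T = compr_spectrum (V n) T \<union> \<Omega>)"
        "\<forall>n. \<exists>xs. good T D False (V n) xs \<and> Hs n = cspan (V n \<union> set xs) \<and>
                 (\<forall>x\<in>set xs. \<exists>\<omega>\<in>\<Omega>. dist (cinner (T x) x) \<omega> < 1)"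
        using main_build[OF T_lin V_fd V_dom V_conv _ \<Omega>_compact \<Omega>_sub, of False 1] by auto
      obtain \<delta> where \<delta>: "\<delta> > 0" "\<forall>H. fin_dim_subspace H \<longrightarrow> H \<subseteq> D \<longrightarrow>
            (\<forall>h\<in>H. \<delta> * cnorm h \<le> cnorm (proj H (T h) - l0 *\<^sub>C h))"
        using LB_a1[OF T_lin] g(2) False by blast
      have E: "l0 \<in> resolvent_set (Hs n) (Hs n) (compr (Hs n) T) \<and>
          (\<forall>x. cnorm (resolvent (Hs n) (compr (Hs n) T) l0 (proj (Hs n) x) - resolvent (V n) (compr (V n) T) l0 (proj (V n) x))
                  \<le> (1/\<delta>) * cnorm (x - proj (V n) x))" if n: "n0 \<le> n" for n
      proof -
        obtain xs where xs: "good T D False (V n) xs" "Hs n = cspan (V n \<union> set xs)" using Hs(5) by blast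
        have H: "fin_dim_subspace (Hs n)" "Hs n \<subseteq> D" "V n \<subseteq> Hs n" using Hs(1) by auto
        have PV: "\<forall>v\<in>V n. proj (Hs n) (T v) = proj (V n) (T v)"
          using good_projV[OF T_lin V_fd V_dom xs(1)] xs(2) by simp
        have LB: "\<forall>h\<in>Hs n. proj (Hs n) (T h) - l0 *\<^sub>C h \<in> orth (V n) \<longrightarrow> \<delta> * cnorm h \<le> cnorm (proj (Hs n) (T h) - l0 *\<^sub>C h)"
          using \<delta>(2) H by blast
        note e = est[OF T_lin H(1,2) V_fd H(3) lV[OF n] PV \<delta>(1) LB]
        show ?thesis
        proof (intro conjI allI)
          show "l0 \<in> resolvent_set (Hs n) (Hs n) (compr (Hs n) T)" using e(1) .
          fix x show "cnorm (resolvent (Hs n) (compr (Hs n) T) l0 (proj (Hs n) x) - resolvent (V n) (compr (V n) T) l0 (proj (V n) x))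
                  \<le> (1/\<delta>) * cnorm (x - proj (V n) x)" using e(2)[of x] \<delta>(1) by (simp add: field_simps)
        qed
      qed
      have "compr_gsr_with Hs D T n0 l0"
        by (rule gsr_conclude[OF g(1) V_conv, where c = "1/\<delta>"]) (use E \<delta>(1) in auto)
      then have "compr_gsr Hs D T" unfolding compr_gsr_def by blast
      then show ?thesis using Hs(1-4) by blast
    next
      case True
      have adj: "D \<subseteq> adj_dom D T" using \<open>?P\<close> True by blast
      have l0O: "l0 \<notin> \<Omega>" using g(3) True by blast
      define d where "d = (if \<Omega> = {} then 1 else infdist l0 \<Omega>)"
      have d: "d > 0" unfolding d_def using infdist_pos_not_in_closed[OF compact_imp_closed[OF \<Omega>_compact] _ l0O] by auto
      define \<rho> where "\<rho> = d / 2"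
      have \<rho>: "\<rho> > 0" unfolding \<rho>_def using d by simp
      obtain Hs where Hs: "\<forall>n. fin_dim_subspace (Hs n) \<and> Hs n \<subseteq> D \<and> V n \<subseteq> Hs n" "proj_strong_to_id Hs"
        "\<forall>e>0. \<exists>N. \<forall>n\<ge>N. \<forall>l\<in>\<Omega>. infdist l (compr_spectrum (Hs n) T) < e"
        "?FI \<longrightarrow> (\<forall>n. compr_spectrum (Hs n) T = compr_spectrum (V n) T \<union> \<Omega>)"
        "\<forall>n. \<exists>xs. good T D True (V n) xs \<and> Hs n = cspan (V n \<union> set xs) \<and>
                 (\<forall>x\<in>set xs. \<exists>\<omega>\<in>\<Omega>. dist (cinner (T x) x) \<omega> < \<rho>)"
        using main_build[OF T_lin V_fd V_dom V_conv _ \<Omega>_compact \<Omega>_sub \<rho>, of True] adj by auto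
      have far: "\<rho> \<le> cmod (\<mu> - l0)" if "\<omega> \<in> \<Omega>" "dist \<mu> \<omega> < \<rho>" for \<mu> \<omega>
      proof -
        have "d \<le> dist l0 \<omega>" unfolding d_def using that(1) infdist_le[of \<omega> \<Omega> l0] by auto
        moreover have "dist l0 \<omega> \<le> dist l0 \<mu> + dist \<mu> \<omega>" by (rule dist_triangle)
        ultimately show ?thesis using that(2) unfolding \<rho>_def by (simp add: dist_norm norm_minus_commute)
      qed
      have E: "l0 \<in> resolvent_set (Hs n) (Hs n) (compr (Hs n) T) \<and>
          (\<forall>x. cnorm (resolvent (Hs n) (compr (Hs n) T) l0 (proj (Hs n) x) - resolvent (V n) (compr (V n) T) l0 (proj (V n) x))
                  \<le> (1/\<rho>) * cnorm (x - proj (V n) x))" if n: "n0 \<le> n" for n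
      proof -
        obtain xs where xs: "good T D True (V n) xs" "Hs n = cspan (V n \<union> set xs)"
          "\<forall>x\<in>set xs. \<exists>\<omega>\<in>\<Omega>. dist (cinner (T x) x) \<omega> < \<rho>" using Hs(5) by blast
        have H: "fin_dim_subspace (Hs n)" "Hs n \<subseteq> D" "V n \<subseteq> Hs n" using Hs(1) by auto
        have PV: "\<forall>v\<in>V n. proj (Hs n) (T v) = proj (V n) (T v)"
          using good_projV[OF T_lin V_fd V_dom xs(1)] xs(2) by simp
        have mu: "\<forall>x\<in>set xs. \<rho> \<le> cmod (cinner (T x) x - l0)" using xs(3) far by blast
        have inv2: "\<forall>h\<in>Hs n. h \<in> orth (V n) \<longrightarrow> proj (Hs n) (T h) - l0 *\<^sub>C h \<in> orth (V n) \<and>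
              \<rho> * cnorm h \<le> cnorm (proj (Hs n) (T h) - l0 *\<^sub>C h)"
          using good_inv2[OF T_lin V_fd V_dom xs(1) _ mu] \<rho> xs(2) by simp
        have LB: "\<forall>h\<in>Hs n. proj (Hs n) (T h) - l0 *\<^sub>C h \<in> orth (V n) \<longrightarrow> \<rho> * cnorm h \<le> cnorm (proj (Hs n) (T h) - l0 *\<^sub>C h)"
          using LB_a2[OF T_lin H(1,2) V_fd H(3) lV[OF n] PV inv2] .
        note e = est[OF T_lin H(1,2) V_fd H(3) lV[OF n] PV \<rho> LB]
        show ?thesis
        proof (intro conjI allI)
          show "l0 \<in> resolvent_set (Hs n) (Hs n) (compr (Hs n) T)" using e(1) .
          fix x show "cnorm (resolvent (Hs n) (compr (Hs n) T) l0 (proj (Hs n) x) - resolvent (V n) (compr (V n) T) l0 (proj (V n) x))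
                  \<le> (1/\<rho>) * cnorm (x - proj (V n) x)" using e(2)[of x] \<rho> by (simp add: field_simps)
        qed
      qed
      have "compr_gsr_with Hs D T n0 l0"
        by (rule gsr_conclude[OF g(1) V_conv, where c = "1/\<rho>"]) (use E \<rho> in auto)
      then have "compr_gsr Hs D T" unfolding compr_gsr_def by blast
      then show ?thesis using Hs(1-4) by blast
    qed
  qed
qed

end
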